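(* Let $W$ be a linear space over $\mathbb{K}\in\{\mathbb{R},\mathbb{C}\}$, let $0<q\le 1$, let $V\neq\{0\}$ be a $W$-spreading $q$-space, let $\Omega$ be a nonempty set and let $A$ be an $(\Omega,V)$-stable function space. Let $\mathcal{N}=\{f\in A: f \text{ is not injective}\}$. Then either $\mathcal{N}=\{0\}$ or $\mathcal{N}$ is pointwise spaceable in $A$, i.e., for every $f\in\mathcal{N}$ there is a closed $\mathfrak{c}$-dimensional (in particular infinite dimensional) linear subspace $X$ of $A$ with $f\in X\subseteq\mathcal{N}$.
   Context: For $0<q\le 1$, a $q$-norm on a linear space $X$ is a map $\|\cdot\|\colon X\to[0,\infty)$ with $\|x\|=0$ iff $x=0$, $\|\lambda x\|=|\lambda|\,\|x\|$, and $\|x+y\|^q\le\|x\|^q+\|y\|^q$; a $q$-Banach space is a space with a complete $q$-norm. $\mathfrak{c}$ is the cardinality of the continuum. A $W$-spreading $q$-space is a linear subspace $V$ of the space $W^{\mathbb{N}}$ of $W$-valued sequences (coordinatewise operations) endowed with a complete $q$-norm $\|\cdot\|_V$ such that: whenever $(a_j)_{j=1}^\infty\in V$ and $\mathbb{N}_0=\{j_1<j_2<\cdots\}$ is an infinite subset of $\mathbb{N}$, the sequence $(b_k)_{k}$ with $b_k=a_i$ if $k=j_i$ and $b_k=0$ if $k\notin\mathbb{N}_0$ belongs to $V$ and $\|(b_k)_k\|_V\le\|(a_j)_j\|_V$. For a nonempty set $\Omega$ and a $q$-Banach space $F$, an $(\Omega,F)$-stable function space is a linear subspace $A\neq\{0\}$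 of the space $F^\Omega$ of all maps $\Omega\to F$ (pointwise operations), endowed with a complete $q$-norm $\|\cdot\|_A$, such that: (i) the topology induced by $\|\cdot\|_A$ contains (is finer than) the topology of pointwise convergence on $A$; (ii) for every $g\in A$ and every bounded linear operator $u\colon F\to F$, one has $u\circ g\in A$ and $\|u\circ g\|_A\le\|u\|\,\|g\|_A$. *)

theory Defs
  imports "HOL-Analysis.Analysis" "HOL-Library.Function_Algebras" "HOL-Library.Equipollence"
begin

definition seq_scale :: "('k \<Rightarrow> 'w \<Rightarrow> 'w) \<Rightarrow> 'k \<Rightarrow> (nat \<Rightarrow> 'w) \<Rightarrow> (nat \<Rightarrow> 'w)" where
  "seq_scale s c x = (\<lambda>j. s c (x j))"

definition fun_scale :: "('k \<Rightarrow> 'v \<Rightarrow> 'v) \<Rightarrow> 'k \<Rightarrow> ('o \<Rightarrow> 'v) \<Rightarrow> ('o \<Rightarrow> 'v)" where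
  "fun_scale s c f = (\<lambda>\<omega>. s c (f \<omega>))"

definition linear_subspace :: "('k \<Rightarrow> 'v::ab_group_add \<Rightarrow> 'v) \<Rightarrow> 'v set \<Rightarrow> bool" where
  "linear_subspace s X \<longleftrightarrow> 0 \<in> X \<and> (\<forall>x\<in>X. \<forall>y\<in>X. x + y \<in> X) \<and> (\<forall>c. \<forall>x\<in>X. s c x \<in> X)"

definition is_qnorm :: "real \<Rightarrow> ('k::real_normed_field \<Rightarrow> 'v::ab_group_add \<Rightarrow> 'v) \<Rightarrow> 'v set \<Rightarrow> ('v \<Rightarrow> real) \<Rightarrow> bool" where
  "is_qnorm q s X n \<longleftrightarrow>
     (\<forall>x\<in>X. 0 \<le> n x \<and> (n x = 0 \<longleftrightarrow> x = 0)) \<and>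
     (\<forall>c. \<forall>x\<in>X. n (s c x) = norm c * n x) \<and>
     (\<forall>x\<in>X. \<forall>y\<in>X. n (x + y) powr q \<le> n x powr q + n y powr q)"

text \<open>Completeness of a q-norm (Cauchy sequences for d(x,y) = n(x-y)^q, equivalently
for n(x-y), converge).\<close>

definition qnorm_complete :: "'v::ab_group_add set \<Rightarrow> ('v \<Rightarrow> real) \<Rightarrow> bool" where
  "qnorm_complete X n \<longleftrightarrow>
     (\<forall>x::nat \<Rightarrow> 'v. (\<forall>m. x m \<in> X) \<longrightarrow>
        (\<forall>e>0. \<exists>N. \<forall>m\<ge>N. \<forall>p\<ge>N. n (x m - x p) < e) \<longrightarrow>
        (\<exists>y\<in>X. (\<lambda>m. n (x m - y)) \<longlonglongrightarrow> 0))"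

definition complete_qnorm :: "real \<Rightarrow> ('k::real_normed_field \<Rightarrow> 'v::ab_group_add \<Rightarrow> 'v) \<Rightarrow> 'v set \<Rightarrow> ('v \<Rightarrow> real) \<Rightarrow> bool" where
  "complete_qnorm q s X n \<longleftrightarrow> is_qnorm q s X n \<and> qnorm_complete X n"

definition qnorm_topology :: "'v::ab_group_add set \<Rightarrow> ('v \<Rightarrow> real) \<Rightarrow> 'v topology" where
  "qnorm_topology X n = topology (\<lambda>U. U \<subseteq> X \<and> (\<forall>x\<in>U. \<exists>e>0. \<forall>y\<in>X. n (y - x) < e \<longrightarrow> y \<in> U))"

text \<open>W-spreading q-space (W given by its scalar multiplication sW; sequences indexed by nat).\<close>

definition spreading_qspace :: "('k::real_normed_field \<Rightarrow> 'w::ab_group_add \<Rightarrow> 'w) \<Rightarrow> real \<Rightarrow> (nat \<Rightarrow> 'w) set \<Rightarrow> ((nat \<Rightarrow> 'w) \<Rightarrow> real) \<Rightarrow> bool" where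
  "spreading_qspace sW q V nV \<longleftrightarrow>
     linear_subspace (seq_scale sW) V \<and> complete_qnorm q (seq_scale sW) V nV \<and>
     (\<forall>a\<in>V. \<forall>N0::nat set. infinite N0 \<longrightarrow>
        (\<forall>b. (\<forall>i. b (Infinite_Set.enumerate N0 i) = a i) \<and> (\<forall>k. k \<notin> N0 \<longrightarrow> b k = 0)
             \<longrightarrow> b \<in> V \<and> nV b \<le> nV a))"

definition bounded_op :: "('k \<Rightarrow> 'v::ab_group_add \<Rightarrow> 'v) \<Rightarrow> 'v set \<Rightarrow> ('v \<Rightarrow> real) \<Rightarrow> ('v \<Rightarrow> 'v) \<Rightarrow> bool" where
  "bounded_op s F nF u \<longleftrightarrow>
     (\<forall>x\<in>F. u x \<in> F) \<and> (\<forall>x\<in>F. \<forall>y\<in>F. u (x + y) = u x + u y) \<and>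
     (\<forall>c. \<forall>x\<in>F. u (s c x) = s c (u x)) \<and> (\<exists>C. \<forall>x\<in>F. nF (u x) \<le> C * nF x)"

definition op_norm :: "'v set \<Rightarrow> ('v \<Rightarrow> real) \<Rightarrow> ('v \<Rightarrow> 'v) \<Rightarrow> real" where
  "op_norm F nF u = Sup {nF (u x) | x. x \<in> F \<and> nF x \<le> 1}"

text \<open>(Omega,F)-stable function space, with Omega = UNIV :: 'o set (any nonempty set is a type).
F is given by its carrier, scalar multiplication sF and q-norm nF.\<close>

definition stable_function_space :: "('k::real_normed_field \<Rightarrow> 'v::ab_group_add \<Rightarrow> 'v) \<Rightarrow> real \<Rightarrow> 'v set \<Rightarrow> ('v \<Rightarrow> real)
     \<Rightarrow> ('o \<Rightarrow> 'v) set \<Rightarrow> (('o \<Rightarrow> 'v) \<Rightarrow> real) \<Rightarrow> bool" where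
  "stable_function_space sF q F nF A nA \<longleftrightarrow>
     A \<subseteq> {f. \<forall>\<omega>. f \<omega> \<in> F} \<and> A \<noteq> {0} \<and>
     linear_subspace (fun_scale sF) A \<and> complete_qnorm q (fun_scale sF) A nA \<and>
     (\<forall>U. openin (subtopology (product_topology (\<lambda>_. qnorm_topology F nF) UNIV) A) U
          \<longrightarrow> openin (qnorm_topology A nA) U) \<and>
     (\<forall>g\<in>A. \<forall>u. bounded_op sF F nF u \<longrightarrow> u \<circ> g \<in> A \<and> nA (u \<circ> g) \<le> op_norm F nF u * nA g)"

definition pointwise_spaceable :: "('k::field \<Rightarrow> 'v::ab_group_add \<Rightarrow> 'v) \<Rightarrow> 'v set \<Rightarrow> ('v \<Rightarrow> real) \<Rightarrow> 'v set \<Rightarrow> bool" where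
  "pointwise_spaceable s A nA N \<longleftrightarrow>
     (\<forall>f\<in>N. \<exists>X. linear_subspace s X \<and> X \<subseteq> A \<and> closedin (qnorm_topology A nA) X \<and>
        f \<in> X \<and> X \<subseteq> N \<and>
        (\<exists>B. B \<subseteq> X \<and> \<not> module.dependent s B \<and> module.span s B = X \<and> B \<approx> (UNIV :: real set)))"

end

theory Submission
  imports Defs "HOL-Library.Nat_Bijection"
begin

locale qns =
  fixes s :: "'k::{real_normed_field,heine_borel} \<Rightarrow> 'v::ab_group_add \<Rightarrow> 'v"
    and q :: real and E :: "'v set" and n :: "'v \<Rightarrow> real"
  assumes vs: "vector_space s" and subE: "linear_subspace s E" and qn: "is_qnorm q s E n"
    and q0: "0 < q" and q1: "q \<le> 1"
begin

sublocale vector_space s by (rule vs)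

definition pn :: "'v \<Rightarrow> real" where "pn x = n x powr q"

lemma E0[simp]: "0 \<in> E" using subE by (simp add: linear_subspace_def)
lemma Eadd[intro]: "x \<in> E \<Longrightarrow> y \<in> E \<Longrightarrow> x + y \<in> E" using subE by (simp add: linear_subspace_def)
lemma Escale[intro]: "x \<in> E \<Longrightarrow> s c x \<in> E" using subE by (simp add: linear_subspace_def)
lemma Eminus[intro]: "x \<in> E \<Longrightarrow> - x \<in> E"
  using Escale[of x "-1"] by simp
lemma Ediff[intro]: "x \<in> E \<Longrightarrow> y \<in> E \<Longrightarrow> x - y \<in> E"
  using Eadd[of x "-y"] Eminus[of y] by simp
lemma Esum[intro]: "finite T \<Longrightarrow> (\<And>i. i \<in> T \<Longrightarrow> f i \<in> E) \<Longrightarrow> sum f T \<in> E"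
  by (induction T rule: finite_induct) auto
lemma subspaceE: "subspace E" using subE by (simp add: linear_subspace_def subspace_def)

lemma n_nonneg: "x \<in> E \<Longrightarrow> 0 \<le> n x" using qn by (simp add: is_qnorm_def)
lemma n_eq0: "x \<in> E \<Longrightarrow> n x = 0 \<longleftrightarrow> x = 0" using qn by (simp add: is_qnorm_def)
lemma n_scale: "x \<in> E \<Longrightarrow> n (s c x) = norm c * n x" using qn by (simp add: is_qnorm_def)
lemma pn_add: "x \<in> E \<Longrightarrow> y \<in> E \<Longrightarrow> pn (x + y) \<le> pn x + pn y"
  using qn by (simp add: is_qnorm_def pn_def)
lemma n_minus: "x \<in> E \<Longrightarrow> n (- x) = n x"
  using n_scale[of x "-1"] by simp
lemma n_commute: "x \<in> E \<Longrightarrow> y \<in> E \<Longrightarrow> n (x - y) = n (y - x)"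
  using n_minus[of "y - x"] by auto
lemma pn_nonneg: "0 \<le> pn x" by (simp add: pn_def)
lemma pn_eq0: "x \<in> E \<Longrightarrow> pn x = 0 \<longleftrightarrow> x = 0" by (simp add: pn_def n_eq0)
lemma pn_commute: "x \<in> E \<Longrightarrow> y \<in> E \<Longrightarrow> pn (x - y) = pn (y - x)"
  by (simp add: pn_def n_commute)
lemma pn_scale: "x \<in> E \<Longrightarrow> pn (s c x) = norm c powr q * pn x"
  by (simp add: pn_def n_scale powr_mult n_nonneg)
lemma pn_zero[simp]: "pn 0 = 0" using pn_eq0[of 0] by simp
lemma pn_tri: "x \<in> E \<Longrightarrow> y \<in> E \<Longrightarrow> z \<in> E \<Longrightarrow> pn (x - z) \<le> pn (x - y) + pn (y - z)"
  using pn_add[of "x - y" "y - z"] by (auto simp: algebra_simps)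
lemma pn_diff: "x \<in> E \<Longrightarrow> y \<in> E \<Longrightarrow> pn (x - y) \<le> pn x + pn y"
  using pn_add[of x "-y"] Eminus[of y] by (simp add: pn_def n_minus)
lemma pn_sum: "finite T \<Longrightarrow> (\<And>i. i \<in> T \<Longrightarrow> f i \<in> E) \<Longrightarrow> pn (sum f T) \<le> (\<Sum>i\<in>T. pn (f i))"
proof (induction T rule: finite_induct)
  case (insert x F)
  then show ?case using pn_add[of "f x" "sum f F"] Esum[of F f] by auto
qed simp

lemma n_from_pn: "x \<in> E \<Longrightarrow> n x = pn x powr (1/q)"
  using q0 n_nonneg[of x] by (simp add: pn_def powr_powr)

lemma n_less_iff: "x \<in> E \<Longrightarrow> e > 0 \<Longrightarrow> n x < e \<longleftrightarrow> pn x < e powr q"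
  unfolding pn_def using q0 n_nonneg[of x]
  by (meson less_le_not_le powr_less_mono2 powr_mono2 less_imp_le not_le)

lemma tendsto_n_pn:
  assumes "\<And>m. x m \<in> E"
  shows "(\<lambda>m. n (x m)) \<longlonglongrightarrow> 0 \<longleftrightarrow> (\<lambda>m. pn (x m)) \<longlonglongrightarrow> 0"
proof
  assume "(\<lambda>m. n (x m)) \<longlonglongrightarrow> 0"
  then show "(\<lambda>m. pn (x m)) \<longlonglongrightarrow> 0" unfolding pn_def
    by (rule tendsto_zero_powrI) (use q0 n_nonneg assms in auto)
next
  assume "(\<lambda>m. pn (x m)) \<longlonglongrightarrow> 0"
  then have "(\<lambda>m. pn (x m) powr (1/q)) \<longlonglongrightarrow> 0"
    by (rule tendsto_zero_powrI[where b="1/q"]) (use q0 pn_nonneg in auto)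
  then show "(\<lambda>m. n (x m)) \<longlonglongrightarrow> 0" using n_from_pn assms by simp
qed

end

context qns begin

definition qopen :: "'v set \<Rightarrow> bool" where
  "qopen U \<longleftrightarrow> U \<subseteq> E \<and> (\<forall>x\<in>U. \<exists>e>0. \<forall>y\<in>E. n (y - x) < e \<longrightarrow> y \<in> U)"

lemma istop: "istopology qopen"
  unfolding istopology_def
proof (intro conjI allI impI)
  fix S T assume S: "qopen S" and T: "qopen T"
  show "qopen (S \<inter> T)" unfolding qopen_def
  proof (intro conjI ballI)
    show "S \<inter> T \<subseteq> E" using S by (auto simp: qopen_def)
    fix x assume "x \<in> S \<inter> T"
    then obtain e1 e2 where "e1 > 0" "\<forall>y\<in>E. n (y - x) < e1 \<longrightarrow> y \<in> S"
      "e2 > 0" "\<forall>y\<in>E. n (y - x) < e2 \<longrightarrow> y \<in> T"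
      using S T unfolding qopen_def by blast
    then show "\<exists>e>0. \<forall>y\<in>E. n (y - x) < e \<longrightarrow> y \<in> S \<inter> T"
      by (intro exI[of _ "min e1 e2"]) auto
  qed
next
  fix K assume K: "\<forall>k\<in>K. qopen k"
  show "qopen (\<Union>K)" unfolding qopen_def
  proof (intro conjI ballI)
    show "\<Union>K \<subseteq> E" using K by (auto simp: qopen_def)
    fix x assume "x \<in> \<Union>K"
    then obtain k where "k \<in> K" "x \<in> k" by blast
    then obtain e where "e > 0" "\<forall>y\<in>E. n (y - x) < e \<longrightarrow> y \<in> k"
      using K unfolding qopen_def by blast
    then show "\<exists>e>0. \<forall>y\<in>E. n (y - x) < e \<longrightarrow> y \<in> \<Union>K" using \<open>k \<in> K\<close> by blast
  qed
qed

lemma openin_q: "openin (qnorm_topology E n) = qopen"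
proof -
  have "qnorm_topology E n = topology qopen"
    unfolding qnorm_topology_def qopen_def ..
  then show ?thesis using istop by simp
qed

lemma topspace_q: "topspace (qnorm_topology E n) = E"
proof -
  have "qopen E" unfolding qopen_def by (auto intro: exI[of _ 1])
  moreover have "\<Union>(Collect qopen) \<subseteq> E" by (auto simp: qopen_def)
  ultimately show ?thesis unfolding topspace_def openin_q by blast
qed

lemma ball_open:
  assumes "x \<in> E" "e > 0"
  shows "qopen {y\<in>E. pn (y - x) < e}"
  unfolding qopen_def
proof (intro conjI ballI)
  fix y assume y: "y \<in> {y\<in>E. pn (y - x) < e}"
  define r where "r = e - pn (y - x)"
  have r: "r > 0" using y by (simp add: r_def)
  show "\<exists>e'>0. \<forall>z\<in>E. n (z - y) < e' \<longrightarrow> z \<in> {y\<in>E. pn (y - x) < e}"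
  proof (intro exI[of _ "r powr (1/q)"] conjI ballI impI)
    show "r powr (1/q) > 0" using r by simp
    fix z assume z: "z \<in> E" "n (z - y) < r powr (1/q)"
    have "pn (z - y) < (r powr (1/q)) powr q"
      using n_less_iff[of "z - y" "r powr (1/q)"] z y r by auto
    also have "\<dots> = r" using r q0 by (simp add: powr_powr)
    finally have "pn (z - y) < r" .
    moreover have "pn (z - x) \<le> pn (z - y) + pn (y - x)" using pn_tri z y assms by auto
    ultimately show "z \<in> {y\<in>E. pn (y - x) < e}" using z r_def by auto
  qed
qed auto

lemma in_closure_pn:
  assumes "S \<subseteq> E"
  shows "x \<in> qnorm_topology E n closure_of S \<longleftrightarrow> x \<in> E \<and> (\<forall>e>0. \<exists>y\<in>S. pn (y - x) < e)"
proof
  assume x: "x \<in> qnorm_topology E n closure_of S"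
  then have xE: "x \<in> E" using topspace_q by (simp add: closure_of_def)
  show "x \<in> E \<and> (\<forall>e>0. \<exists>y\<in>S. pn (y - x) < e)"
  proof (intro conjI allI impI xE)
    fix e :: real assume "e > 0"
    then have "openin (qnorm_topology E n) {y\<in>E. pn (y - x) < e}" "x \<in> {y\<in>E. pn (y - x) < e}"
      using ball_open[OF xE] xE by (auto simp: openin_q)
    then obtain y where "y \<in> S" "y \<in> {y\<in>E. pn (y - x) < e}" using x unfolding in_closure_of by meson
    then show "\<exists>y\<in>S. pn (y - x) < e" by blast
  qed
next
  assume H: "x \<in> E \<and> (\<forall>e>0. \<exists>y\<in>S. pn (y - x) < e)"
  show "x \<in> qnorm_topology E n closure_of S"
    unfolding closure_of_def topspace_q
  proof (intro CollectI conjI allI impI)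
    show "x \<in> E" using H by simp
    fix T assume T: "x \<in> T \<and> openin (qnorm_topology E n) T"
    then obtain e where e: "e > 0" "\<forall>y\<in>E. n (y - x) < e \<longrightarrow> y \<in> T"
      unfolding openin_q qopen_def by blast
    have "e powr q > 0" using e by simp
    then obtain y where y: "y \<in> S" "pn (y - x) < e powr q" using H by blast
    have yE: "y \<in> E" "x \<in> E" using y(1) assms H by auto
    have "n (y - x) < e" using n_less_iff[of "y - x" e] e(1) y(2) yE by auto
    then have "y \<in> T" using e(2) yE by blast
    then show "\<exists>y\<in>S. y \<in> T" using y(1) by blast
  qed
qed

lemma in_closure_seq:
  assumes "S \<subseteq> E"
  shows "x \<in> qnorm_topology E n closure_of S \<longleftrightarrow>
     x \<in> E \<and> (\<exists>y. (\<forall>m. y m \<in> S) \<and> (\<lambda>m. pn (y m - x)) \<longlonglongrightarrow> 0)"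
proof
  assume x: "x \<in> qnorm_topology E n closure_of S"
  then have H: "x \<in> E" "\<forall>e>0. \<exists>y\<in>S. pn (y - x) < e" using in_closure_pn[OF assms] by auto
  define y where "y m = (SOME y. y \<in> S \<and> pn (y - x) < 1 / real (Suc m))" for m
  have y: "y m \<in> S \<and> pn (y m - x) < 1 / real (Suc m)" for m
  proof -
    have "1 / real (Suc m) > 0" by simp
    then have "\<exists>y. y \<in> S \<and> pn (y - x) < 1 / real (Suc m)" using H(2) by blast
    then show ?thesis unfolding y_def by (rule someI_ex)
  qed
  have "(\<lambda>m. pn (y m - x)) \<longlonglongrightarrow> 0"
  proof (rule tendsto_sandwich[of "\<lambda>_. 0" _ _ "\<lambda>m. 1 / real (Suc m)"])
    show "(\<lambda>m. 1 / real (Suc m)) \<longlonglongrightarrow> 0" using LIMSEQ_inverse_real_of_nat by (simp add: inverse_eq_divide)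
    show "\<forall>\<^sub>F m in sequentially. 0 \<le> pn (y m - x)" by (simp add: pn_nonneg)
    show "\<forall>\<^sub>F m in sequentially. pn (y m - x) \<le> 1 / real (Suc m)"
      using y by (intro always_eventually allI) (meson less_imp_le)
  qed simp
  then show "x \<in> E \<and> (\<exists>y. (\<forall>m. y m \<in> S) \<and> (\<lambda>m. pn (y m - x)) \<longlonglongrightarrow> 0)" using y H by blast
next
  assume H: "x \<in> E \<and> (\<exists>y. (\<forall>m. y m \<in> S) \<and> (\<lambda>m. pn (y m - x)) \<longlonglongrightarrow> 0)"
  then obtain y where y: "\<forall>m. y m \<in> S" "(\<lambda>m. pn (y m - x)) \<longlonglongrightarrow> 0" by blast
  have "\<exists>z\<in>S. pn (z - x) < e" if "e > 0" for e
  proof -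
    have "eventually (\<lambda>m. pn (y m - x) < e) sequentially" using order_tendstoD(2)[OF y(2) that] .
    then obtain m where "pn (y m - x) < e" using eventually_sequentially by auto
    then show ?thesis using y by blast
  qed
  then show "x \<in> qnorm_topology E n closure_of S" using in_closure_pn[OF assms] H by blast
qed

lemma closedin_seq:
  "closedin (qnorm_topology E n) C \<longleftrightarrow> C \<subseteq> E \<and>
     (\<forall>y x. (\<forall>m. y m \<in> C) \<longrightarrow> x \<in> E \<longrightarrow> (\<lambda>m. pn (y m - x)) \<longlonglongrightarrow> 0 \<longrightarrow> x \<in> C)"
proof
  assume C: "closedin (qnorm_topology E n) C"
  then have CE: "C \<subseteq> E" using closedin_subset[OF C] topspace_q by simp
  have eq: "qnorm_topology E n closure_of C = C" using C by (simp add: closure_of_eq)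
  show "C \<subseteq> E \<and> (\<forall>y x. (\<forall>m. y m \<in> C) \<longrightarrow> x \<in> E \<longrightarrow> (\<lambda>m. pn (y m - x)) \<longlonglongrightarrow> 0 \<longrightarrow> x \<in> C)"
  proof (intro conjI allI impI CE)
    fix y x assume "\<forall>m. y m \<in> C" "x \<in> E" "(\<lambda>m. pn (y m - x)) \<longlonglongrightarrow> 0"
    then have "x \<in> qnorm_topology E n closure_of C" by (subst in_closure_seq[OF CE, of x]) blast
    then show "x \<in> C" using eq by simp
  qed
next
  assume H: "C \<subseteq> E \<and> (\<forall>y x. (\<forall>m. y m \<in> C) \<longrightarrow> x \<in> E \<longrightarrow> (\<lambda>m. pn (y m - x)) \<longlonglongrightarrow> 0 \<longrightarrow> x \<in> C)"
  have "x \<in> C" if "x \<in> qnorm_topology E n closure_of C" for x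
  proof -
    have CE: "C \<subseteq> E" using H by simp
    have "x \<in> E \<and> (\<exists>y. (\<forall>m. y m \<in> C) \<and> (\<lambda>m. pn (y m - x)) \<longlonglongrightarrow> 0)"
      using that in_closure_seq[OF CE, of x] by simp
    then obtain y where "x \<in> E" "\<forall>m. y m \<in> C" "(\<lambda>m. pn (y m - x)) \<longlonglongrightarrow> 0" by blast
    then show ?thesis using H by simp
  qed
  moreover have "C \<subseteq> qnorm_topology E n closure_of C"
    using closure_of_subset[of C "qnorm_topology E n"] H topspace_q by simp
  ultimately have "qnorm_topology E n closure_of C = C" by blast
  then show "closedin (qnorm_topology E n) C" by (metis closure_of_eq)
qed

lemma lim_unique:
  assumes "x \<in> E" "x' \<in> E" "\<And>m. y m \<in> E" "(\<lambda>m. pn (y m - x)) \<longlonglongrightarrow> 0" "(\<lambda>m. pn (y m - x')) \<longlonglongrightarrow> 0"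
  shows "x = x'"
proof -
  have le: "pn (x - x') \<le> pn (y m - x) + pn (y m - x')" for m
    using pn_tri[of x "y m" x'] pn_commute[of x "y m"] assms by auto
  have "(\<lambda>m. pn (y m - x) + pn (y m - x')) \<longlonglongrightarrow> 0" using tendsto_add[OF assms(4,5)] by simp
  then have "pn (x - x') \<le> 0" using le by (intro LIMSEQ_le_const) auto
  then have "pn (x - x') = 0" using pn_nonneg[of "x - x'"] by linarith
  then show ?thesis using pn_eq0[of "x - x'"] assms by auto
qed

lemma closure_subspace:
  assumes "subspace S" "S \<subseteq> E"
  shows "subspace (qnorm_topology E n closure_of S)"
  unfolding subspace_def
proof (intro conjI ballI allI)
  show "0 \<in> qnorm_topology E n closure_of S"
  proof -
    have "S \<subseteq> qnorm_topology E n closure_of S" using closure_of_subset[of S] assms(2) topspace_q by simp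
    then show ?thesis using subspace_0[OF assms(1)] by blast
  qed
  fix x y assume x: "x \<in> qnorm_topology E n closure_of S" and y: "y \<in> qnorm_topology E n closure_of S"
  obtain a where a: "\<forall>m. a m \<in> S" "(\<lambda>m. pn (a m - x)) \<longlonglongrightarrow> 0" "x \<in> E"
    using x in_closure_seq[OF assms(2)] by blast
  obtain b where b: "\<forall>m. b m \<in> S" "(\<lambda>m. pn (b m - y)) \<longlonglongrightarrow> 0" "y \<in> E"
    using y in_closure_seq[OF assms(2)] by blast
  have "(\<lambda>m. pn ((a m + b m) - (x + y))) \<longlonglongrightarrow> 0"
  proof (rule tendsto_sandwich[of "\<lambda>_. 0" _ _ "\<lambda>m. pn (a m - x) + pn (b m - y)"])
    show "\<forall>\<^sub>F m in sequentially. pn (a m + b m - (x + y)) \<le> pn (a m - x) + pn (b m - y)"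
    proof (intro always_eventually allI)
      fix m
      have eq: "a m + b m - (x + y) = (a m - x) + (b m - y)" by (simp add: algebra_simps)
      show "pn (a m + b m - (x + y)) \<le> pn (a m - x) + pn (b m - y)"
        unfolding eq by (rule pn_add) (use a b assms(2) in auto)
    qed
    show "(\<lambda>m. pn (a m - x) + pn (b m - y)) \<longlonglongrightarrow> 0" using tendsto_add[OF a(2) b(2)] by simp
  qed (auto simp: pn_nonneg)
  moreover have "\<forall>m. a m + b m \<in> S" using a(1) b(1) subspace_add[OF assms(1)] by blast
  moreover have "x + y \<in> E" using a b by auto
  ultimately show "x + y \<in> qnorm_topology E n closure_of S"
    by (subst in_closure_seq[OF assms(2)]) (intro conjI exI[of _ "\<lambda>m. a m + b m"]; simp)
next
  fix c x assume x: "x \<in> qnorm_topology E n closure_of S"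
  obtain a where a: "\<forall>m. a m \<in> S" "(\<lambda>m. pn (a m - x)) \<longlonglongrightarrow> 0" "x \<in> E"
    using x in_closure_seq[OF assms(2)] by blast
  have eq: "pn (s c (a m) - s c x) = norm c powr q * pn (a m - x)" for m
    using pn_scale[of "a m - x" c] a assms(2) by (auto simp: scale_right_diff_distrib)
  have "(\<lambda>m. pn (s c (a m) - s c x)) \<longlonglongrightarrow> 0"
    unfolding eq using tendsto_mult[OF tendsto_const a(2)] by simp
  moreover have "\<forall>m. s c (a m) \<in> S" using a(1) subspace_scale[OF assms(1)] by blast
  moreover have "s c x \<in> E" using a by auto
  ultimately show "s c x \<in> qnorm_topology E n closure_of S"
    by (subst in_closure_seq[OF assms(2)]) (intro conjI exI[of _ "\<lambda>m. s c (a m)"]; simp)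
qed

end

locale qbs = qns + assumes cpl: "qnorm_complete E n"
begin

lemma complete_pn:
  assumes "\<And>m. x m \<in> E" "\<And>e. e > 0 \<Longrightarrow> \<exists>N. \<forall>m\<ge>N. \<forall>p\<ge>N. pn (x m - x p) < e"
  shows "\<exists>y\<in>E. (\<lambda>m. pn (x m - y)) \<longlonglongrightarrow> 0"
proof -
  have "\<exists>N. \<forall>m\<ge>N. \<forall>p\<ge>N. n (x m - x p) < e" if "e > 0" for e
  proof -
    have "e powr q > 0" using that by simp
    then obtain N where "\<forall>m\<ge>N. \<forall>p\<ge>N. pn (x m - x p) < e powr q" using assms(2) by blast
    then show ?thesis using n_less_iff that assms(1) by blast
  qed
  then obtain y where "y \<in> E" "(\<lambda>m. n (x m - y)) \<longlonglongrightarrow> 0"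
    using cpl assms(1) unfolding qnorm_complete_def by blast
  then show ?thesis using tendsto_n_pn[of "\<lambda>m. x m - y"] assms(1) by blast
qed

end

context qns begin

lemma span_subE: "T \<subseteq> E \<Longrightarrow> span T \<subseteq> E"
  using span_minimal[OF _ subspaceE] by blast

lemma span_closed_finite:
  assumes "finite L" "L \<subseteq> E"
  shows "\<forall>y x. (\<forall>m. y m \<in> span L) \<longrightarrow> x \<in> E \<longrightarrow> (\<lambda>m. pn (y m - x)) \<longlonglongrightarrow> 0 \<longrightarrow> x \<in> span L"
  using assms
proof (induction L rule: finite_induct)
  case empty
  show ?case
  proof (intro allI impI)
    fix y x assume y: "\<forall>m. y m \<in> span {}" and x: "x \<in> E" and c: "(\<lambda>m. pn (y m - x)) \<longlonglongrightarrow> 0"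
    have y0: "y m = 0" for m using y by simp
    have "x = 0"
      by (rule lim_unique[of x 0 y]) (use x y0 c in auto)
    then show "x \<in> span {}" by simp
  qed
next
  case (insert v L)
  have vE: "v \<in> E" and LE: "L \<subseteq> E" using insert.prems by auto
  have IH: "\<And>y x. (\<forall>m. y m \<in> span L) \<Longrightarrow> x \<in> E \<Longrightarrow> (\<lambda>m. pn (y m - x)) \<longlonglongrightarrow> 0 \<Longrightarrow> x \<in> span L"
    using insert.IH LE by blast
  have spLE: "span L \<subseteq> E" using span_subE[OF LE] .
  show ?case
  proof (cases "v \<in> span L")
    case True
    then show ?thesis using IH span_redundant[OF True] by simp
  next
    case False
    show ?thesis
    proof (intro allI impI)
      fix y x assume y: "\<forall>m. y m \<in> span (insert v L)" and x: "x \<in> E"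
        and cv: "(\<lambda>m. pn (y m - x)) \<longlonglongrightarrow> 0"
      have "\<exists>k. y m - s k v \<in> span L" for m using y span_breakdown_eq[of "y m" v L] by simp
      then obtain c where c: "\<And>m. y m - s (c m) v \<in> span L" by metis
      define z where "z m = y m - s (c m) v" for m
      have z: "z m \<in> span L" for m using c z_def by simp
      have yE: "y m \<in> E" for m
      proof -
        have "y m = z m + s (c m) v" by (simp add: z_def)
        moreover have "z m \<in> E" using z[of m] spLE by blast
        ultimately show ?thesis using vE by auto
      qed
      show "x \<in> span (insert v L)"
      proof (cases "\<exists>B. \<forall>m. norm (c m) \<le> B")
        case True
        then have "bounded (range c)" by (auto simp: bounded_iff)
        then obtain l r where r: "strict_mono r" and l: "(c \<circ> r) \<longlonglongrightarrow> l"
          using bounded_imp_convergent_subsequence by blast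
        have "(\<lambda>m. pn (z (r m) - (x - s l v))) \<longlonglongrightarrow> 0"
        proof (rule tendsto_sandwich[of "\<lambda>_. 0" _ _ "\<lambda>m. pn (y (r m) - x) + norm (l - c (r m)) powr q * pn v"])
          show "\<forall>\<^sub>F m in sequentially. 0 \<le> pn (z (r m) - (x - s l v))" by (simp add: pn_nonneg)
          show "\<forall>\<^sub>F m in sequentially. pn (z (r m) - (x - s l v)) \<le> pn (y (r m) - x) + norm (l - c (r m)) powr q * pn v"
          proof (intro always_eventually allI)
            fix m
            have eq: "z (r m) - (x - s l v) = (y (r m) - x) + s (l - c (r m)) v"
              by (simp add: z_def algebra_simps scale_left_diff_distrib)
            have "pn (z (r m) - (x - s l v)) \<le> pn (y (r m) - x) + pn (s (l - c (r m)) v)"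
              unfolding eq by (rule pn_add) (use yE x vE in auto)
            then show "pn (z (r m) - (x - s l v)) \<le> pn (y (r m) - x) + norm (l - c (r m)) powr q * pn v"
              using pn_scale[OF vE] by simp
          qed
          have t1: "(\<lambda>m. pn (y (r m) - x)) \<longlonglongrightarrow> 0"
            using LIMSEQ_subseq_LIMSEQ[OF cv r] by (simp add: o_def)
          have "(\<lambda>m. l - c (r m)) \<longlonglongrightarrow> 0"
            using tendsto_diff[OF tendsto_const[of l] l] by (simp add: o_def)
          then have "(\<lambda>m. norm (l - c (r m))) \<longlonglongrightarrow> 0" using tendsto_norm_zero by blast
          then have "(\<lambda>m. norm (l - c (r m)) powr q) \<longlonglongrightarrow> 0"
            by (rule tendsto_zero_powrI[where b=q]) (use q0 in auto)
          then have t2: "(\<lambda>m. norm (l - c (r m)) powr q * pn v) \<longlonglongrightarrow> 0"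
            using tendsto_mult[OF _ tendsto_const[of "pn v"]] by fastforce
          show "(\<lambda>m. pn (y (r m) - x) + norm (l - c (r m)) powr q * pn v) \<longlonglongrightarrow> 0"
            using tendsto_add[OF t1 t2] by simp
        qed simp
        then have "x - s l v \<in> span L"
          using IH[of "\<lambda>m. z (r m)" "x - s l v"] z x vE by auto
        moreover have "span L \<subseteq> span (insert v L)" by (rule span_mono) blast
        ultimately have a1: "x - s l v \<in> span (insert v L)" by blast
        have "s l v \<in> span (insert v L)" by (rule span_scale, rule span_base) simp
        then have "(x - s l v) + s l v \<in> span (insert v L)" using a1 span_add by blast
        then show ?thesis by simp
      next
        case False
        then have "\<forall>k::nat. \<exists>m. norm (c m) > real k + 1" by (meson not_le)
        then obtain mk where mk: "\<And>k. norm (c (mk k)) > real k + 1" by metis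
        have "convergent (\<lambda>m. pn (y m - x))" using cv by (auto simp: convergent_def)
        then obtain K where K: "K > 0" "\<And>m. norm (pn (y m - x)) \<le> K"
          using convergent_imp_Bseq BseqE by metis
        define w where "w k = - s (1 / c (mk k)) (z (mk k))" for k
        have w: "w k \<in> span L" for k unfolding w_def by (rule span_neg, rule span_scale, rule z)
        have cnz: "c (mk k) \<noteq> 0" for k
        proof -
          have "norm (c (mk k)) > 0" using mk[of k] by (smt (verit) of_nat_0_le_iff)
          then show ?thesis by auto
        qed
        have "(\<lambda>k. pn (w k - v)) \<longlonglongrightarrow> 0"
        proof (rule tendsto_sandwich[of "\<lambda>_. 0" _ _ "\<lambda>k. (1 / (real k + 1)) powr q * (K + pn x)"])
          show "\<forall>\<^sub>F k in sequentially. 0 \<le> pn (w k - v)" by (simp add: pn_nonneg)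
          show "\<forall>\<^sub>F k in sequentially. pn (w k - v) \<le> (1 / (real k + 1)) powr q * (K + pn x)"
          proof (intro always_eventually allI)
            fix k
            have eq: "w k - v = - s (1 / c (mk k)) (y (mk k))"
              using cnz[of k] by (simp add: w_def z_def scale_right_diff_distrib algebra_simps)
            have "pn (w k - v) = pn (s (1 / c (mk k)) (y (mk k)))"
              unfolding eq by (simp add: pn_def n_minus yE Escale)
            also have "\<dots> = norm (1 / c (mk k)) powr q * pn (y (mk k))" by (rule pn_scale[OF yE])
            also have "\<dots> \<le> (1 / (real k + 1)) powr q * (K + pn x)"
            proof (rule mult_mono)
              have "norm (1 / c (mk k)) \<le> 1 / (real k + 1)"
                using mk[of k] by (simp add: norm_divide divide_simps)
              then show "norm (1 / c (mk k)) powr q \<le> (1 / (real k + 1)) powr q"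
                using q0 by (intro powr_mono2) auto
              have "pn (y (mk k)) \<le> pn (y (mk k) - x) + pn x"
                using pn_add[of "y (mk k) - x" x] Ediff[OF yE x] x by simp
              also have "\<dots> \<le> K + pn x" using K(2)[of "mk k"] by simp
              finally show "pn (y (mk k)) \<le> K + pn x" .
            qed (auto simp: pn_nonneg)
            finally show "pn (w k - v) \<le> (1 / (real k + 1)) powr q * (K + pn x)" .
          qed
          have "(\<lambda>k. 1 / (real k + 1)) \<longlonglongrightarrow> 0"
            using LIMSEQ_inverse_real_of_nat by (simp add: inverse_eq_divide add.commute)
          then have "(\<lambda>k. (1 / (real k + 1)) powr q) \<longlonglongrightarrow> 0"
            by (rule tendsto_zero_powrI[where b=q]) (use q0 in auto)
          then show "(\<lambda>k. (1 / (real k + 1)) powr q * (K + pn x)) \<longlonglongrightarrow> 0"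
            using tendsto_mult[OF _ tendsto_const[of "K + pn x"]] by fastforce
        qed simp
        then have "v \<in> span L" using IH[of w v] w vE by auto
        then show ?thesis using \<open>v \<notin> span L\<close> by simp
      qed
    qed
  qed
qed

end

locale dimc = qbs +
  fixes X :: "'b set" and e :: "nat \<Rightarrow> 'b"
  assumes Xsub: "subspace X" and XE: "X \<subseteq> E"
    and Xcl: "\<And>y x. (\<forall>m. y m \<in> X) \<Longrightarrow> x \<in> E \<Longrightarrow> (\<lambda>m. pn (y m - x)) \<longlonglongrightarrow> 0 \<Longrightarrow> x \<in> X"
    and eX: "\<And>k. e k \<in> X" and enot: "\<And>k. e k \<notin> span (e ` {..<k})"
begin

definition F :: "nat \<Rightarrow> 'b set" where "F k = span (e ` {..<k})"

lemma eE: "e k \<in> E" using eX XE by blast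

lemma FE: "F k \<subseteq> E" unfolding F_def by (rule span_subE) (use eE in blast)

lemma FX: "F k \<subseteq> X" unfolding F_def using span_minimal[of "e ` {..<k}" X] Xsub eX by blast

lemma F_mono: "k \<le> l \<Longrightarrow> F k \<subseteq> F l" unfolding F_def by (rule span_mono) auto

lemma e_in_F: "e k \<in> F (Suc k)" unfolding F_def by (rule span_base) auto

lemma F_closed: "(\<forall>m. y m \<in> F k) \<Longrightarrow> x \<in> E \<Longrightarrow> (\<lambda>m. pn (y m - x)) \<longlonglongrightarrow> 0 \<Longrightarrow> x \<in> F k"
  using span_closed_finite[of "e ` {..<k}"] eE unfolding F_def by blast

definition D :: "nat \<Rightarrow> real" where "D k = Inf ((\<lambda>z. n (e k - z)) ` F k)"

lemma D_lower: "z \<in> F k \<Longrightarrow> D k \<le> n (e k - z)"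
  unfolding D_def
proof (rule cInf_lower)
  show "bdd_below ((\<lambda>z. n (e k - z)) ` F k)"
    by (rule bdd_belowI[of _ 0]) (use FE eE n_nonneg in blast)
qed simp

lemma F_ne: "F k \<noteq> {}" unfolding F_def using span_zero by blast

lemma D_pos: "D k > 0"
proof -
  have "\<exists>\<epsilon>>0. \<forall>z\<in>F k. \<epsilon> \<le> n (e k - z)"
  proof (rule ccontr)
    assume H: "\<not> (\<exists>\<epsilon>>0. \<forall>z\<in>F k. \<epsilon> \<le> n (e k - z))"
    have H': "\<exists>z\<in>F k. n (e k - z) < \<epsilon>" if "\<epsilon> > 0" for \<epsilon>
      using H that by (simp add: not_le)
    have "\<exists>z. z \<in> F k \<and> n (e k - z) < 1 / real (Suc m)" for m
    proof -
      have "1 / real (Suc m) > 0" by simp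
      from H'[OF this] show ?thesis by blast
    qed
    then obtain z where z: "\<And>m. z m \<in> F k" "\<And>m. n (e k - z m) < 1 / real (Suc m)" by metis
    have zE: "z m \<in> E" for m using z(1) FE by blast
    have "(\<lambda>m. n (e k - z m)) \<longlonglongrightarrow> 0"
    proof (rule tendsto_sandwich[of "\<lambda>_. 0" _ _ "\<lambda>m. 1 / real (Suc m)"])
      show "\<forall>\<^sub>F m in sequentially. 0 \<le> n (e k - z m)"
        by (intro always_eventually allI n_nonneg Ediff eE zE)
      show "\<forall>\<^sub>F m in sequentially. n (e k - z m) \<le> 1 / real (Suc m)"
        using z(2) by (intro always_eventually allI) (meson less_imp_le)
      show "(\<lambda>m. 1 / real (Suc m)) \<longlonglongrightarrow> 0" using LIMSEQ_inverse_real_of_nat by (simp add: inverse_eq_divide)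
    qed simp
    then have "(\<lambda>m. pn (e k - z m)) \<longlonglongrightarrow> 0" using tendsto_n_pn[of "\<lambda>m. e k - z m"] zE eE by auto
    then have "(\<lambda>m. pn (z m - e k)) \<longlonglongrightarrow> 0" using pn_commute zE eE by simp
    then have "e k \<in> F k" using F_closed[of z k "e k"] z(1) eE by blast
    then show False using enot unfolding F_def by blast
  qed
  then obtain \<epsilon> where "\<epsilon> > 0" "\<forall>z\<in>F k. \<epsilon> \<le> n (e k - z)" by blast
  moreover have "\<epsilon> \<le> D k" unfolding D_def
  proof (rule cInf_greatest)
    show "(\<lambda>z. n (e k - z)) ` F k \<noteq> {}" using F_ne by simp
    fix v assume "v \<in> (\<lambda>z. n (e k - z)) ` F k"
    then obtain z where "z \<in> F k" "v = n (e k - z)" by blast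
    then show "\<epsilon> \<le> v" using calculation(2) by simp
  qed
  ultimately show ?thesis by linarith
qed

lemma z0_ex: "\<exists>z. z \<in> F k \<and> n (e k - z) < 2 * D k"
proof -
  have d: "D k = Inf ((\<lambda>z. n (e k - z)) ` F k)" by (rule D_def)
  have lt: "Inf ((\<lambda>z. n (e k - z)) ` F k) < 2 * D k" using D_pos[of k] d by linarith
  have ne: "(\<lambda>z. n (e k - z)) ` F k \<noteq> {}" using F_ne by simp
  obtain v where "v \<in> (\<lambda>z. n (e k - z)) ` F k" "v < 2 * D k"
    using cInf_lessD[OF ne lt] by blast
  then obtain z where "z \<in> F k" "n (e k - z) < 2 * D k" by blast
  then show ?thesis by blast
qed

definition z0 :: "nat \<Rightarrow> 'b" where "z0 k = (SOME z. z \<in> F k \<and> n (e k - z) < 2 * D k)"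

lemma z0_both: "z0 k \<in> F k \<and> n (e k - z0 k) < 2 * D k"
  unfolding z0_def by (rule someI_ex[OF z0_ex[of k]])
lemma z0: "z0 k \<in> F k" "n (e k - z0 k) < 2 * D k"
  using z0_both[of k] by auto

definition \<delta> :: "nat \<Rightarrow> real" where "\<delta> k = ((1/2) ^ (k * k)) powr (1 / q)"

lemma \<delta>_pos: "\<delta> k > 0" by (simp add: \<delta>_def)

lemma \<delta>_powr: "\<delta> k powr q = (1/2) ^ (k * k)"
  using q0 by (simp add: \<delta>_def powr_powr)

definition x :: "nat \<Rightarrow> 'b" where "x k = s (of_real (\<delta> k / D k)) (e k - z0 k)"

lemma x_F: "x k \<in> F (Suc k)"
proof -
  have "e k - z0 k \<in> F (Suc k)"
    using e_in_F[of k] F_mono[of k "Suc k"] z0(1)[of k] unfolding F_def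
    by (meson le_SucI order_refl span_diff subsetD)
  then show ?thesis unfolding x_def F_def by (rule span_scale)
qed

lemma xE: "x k \<in> E" using x_F FE by blast
lemma xX: "x k \<in> X" using x_F FX by blast

lemma norm_lam: "norm (of_real (\<delta> k / D k) :: 'a) = \<delta> k / D k"
proof -
  have "norm (of_real (\<delta> k / D k) :: 'a) = \<bar>\<delta> k / D k\<bar>" by (rule norm_of_real)
  then show ?thesis using \<delta>_pos[of k] D_pos[of k] by simp
qed

lemma ez: "e k - z0 k \<in> E" using eE z0(1) FE by blast

lemma n_x: "n (x k) \<le> 2 * \<delta> k"
proof -
  have "n (x k) = (\<delta> k / D k) * n (e k - z0 k)"
    unfolding x_def n_scale[OF ez] norm_lam ..
  also have "\<dots> \<le> (\<delta> k / D k) * (2 * D k)"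
    using z0(2)[of k] \<delta>_pos[of k] D_pos[of k] by (intro mult_left_mono) auto
  also have "\<dots> = 2 * \<delta> k" using D_pos[of k] by simp
  finally show ?thesis .
qed

lemma pn_x: "pn (x k) \<le> 2 powr q * (1/2) ^ (k * k)"
proof -
  have "pn (x k) \<le> (2 * \<delta> k) powr q" unfolding pn_def
    using n_x[of k] n_nonneg[OF xE] q0 by (intro powr_mono2) auto
  also have "\<dots> = 2 powr q * (1/2) ^ (k * k)" using \<delta>_pos[of k] \<delta>_powr[of k] by (simp add: powr_mult)
  finally show ?thesis .
qed

lemma x_lower:
  assumes "w \<in> F k" "c \<noteq> 0"
  shows "norm c * \<delta> k \<le> n (s c (x k) + w)"
proof -
  define lam where "lam = (of_real (\<delta> k / D k) :: 'a)"
  have lam0: "lam \<noteq> 0" using \<delta>_pos[of k] D_pos[of k] by (simp add: lam_def)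
  have nlam: "norm lam = \<delta> k / D k" unfolding lam_def by (rule norm_lam)
  define z' where "z' = z0 k - s (1 / (c * lam)) w"
  have z'F: "z' \<in> F k" unfolding z'_def F_def
    using z0(1) assms(1) unfolding F_def by (intro span_diff span_scale)
  have xk: "x k = s lam (e k - z0 k)" unfolding x_def lam_def ..
  have cl: "c * lam \<noteq> 0" using assms(2) lam0 by simp
  have a1: "e k - z' = (e k - z0 k) + s (1 / (c * lam)) w" unfolding z'_def by (simp add: algebra_simps)
  have a2: "s (c * lam) (s (1 / (c * lam)) w) = w" using cl by simp
  have eq: "s c (x k) + w = s (c * lam) (e k - z')"
    unfolding a1 scale_right_distrib a2 xk by simp
  have "n (s c (x k) + w) = norm (c * lam) * n (e k - z')"
    unfolding eq using n_scale eE z'F FE by blast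
  also have "\<dots> \<ge> norm (c * lam) * D k"
    using D_lower[OF z'F] by (intro mult_left_mono) auto
  finally show ?thesis using D_pos[of k] by (simp add: norm_mult nlam)
qed

end

lemma half_pow_sq_le: "m \<le> i \<Longrightarrow> (1/2::real) ^ (i * i) \<le> (1/2) ^ (m * m) * (1/2) ^ (i - m)"
proof -
  assume "m \<le> i"
  then obtain j where i: "i = m + j" using le_Suc_ex by blast
  have jj: "j \<le> j * j" by (rule le_square)
  have ex: "(m + j) * (m + j) = m * m + 2 * m * j + j * j" by (simp add: algebra_simps)
  have "m * m + j \<le> i * i" unfolding i ex using jj by linarith
  then have "(1/2::real) ^ (i * i) \<le> (1/2) ^ (m * m + j)" by (intro power_decreasing) auto
  then show ?thesis by (simp add: power_add i)
qed

lemma geo_tail: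
  assumes "m \<le> p"
  shows "(\<Sum>i\<in>{m..<p}. (1/2::real) ^ (i * i)) \<le> (2 - 2 * (1/2) ^ (p - m)) * (1/2) ^ (m * m)"
  using assms
proof (induction p rule: dec_induct)
  case base
  then show ?case by simp
next
  case (step p)
  have "(\<Sum>i\<in>{m..<Suc p}. (1/2::real) ^ (i * i)) = (\<Sum>i\<in>{m..<p}. (1/2::real) ^ (i * i)) + (1/2) ^ (p * p)"
    using step.hyps(1) by simp
  also have "\<dots> \<le> (2 - 2 * (1/2) ^ (p - m)) * (1/2) ^ (m * m) + (1/2) ^ (m * m) * (1/2) ^ (p - m)"
    using step.IH half_pow_sq_le[of m p] step.hyps(1) by linarith
  also have "\<dots> = (2 - 2 * (1/2) ^ (Suc p - m)) * (1/2) ^ (m * m)"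
    using step.hyps(1) by (simp add: Suc_diff_le algebra_simps)
  finally show ?case .
qed

lemma geo_tail2: "m \<le> p \<Longrightarrow> (\<Sum>i\<in>{m..<p}. (1/2::real) ^ (i * i)) \<le> 2 * (1/2) ^ (m * m)"
proof -
  assume mp: "m \<le> p"
  have "(2 - 2 * (1/2::real) ^ (p - m)) * (1/2) ^ (m * m) \<le> 2 * (1/2) ^ (m * m)"
    by (intro mult_right_mono) auto
  then show ?thesis using geo_tail[OF mp] by linarith
qed

lemma sum_split_nat: "m \<le> p \<Longrightarrow> sum f {..<p} = sum f {..<m} + sum f {m..<p}"
  for f :: "nat \<Rightarrow> 'b::comm_monoid_add"
  using sum.atLeastLessThan_concat[of 0 m p f] by (simp add: atLeast0LessThan)

lemma half_pow_small: "ee > 0 \<Longrightarrow> \<exists>N. \<forall>m\<ge>N. C * (1/2::real) ^ m < ee" if C0: "C \<ge> 0"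
proof -
  assume e: "ee > 0"
  obtain N where N: "(1/2::real) ^ N < ee / (C + 1)"
  proof -
    have "ee / (C + 1) > 0" using e C0 by simp
    then show ?thesis using real_arch_pow_inv[of "ee / (C + 1)" "1/2"] that by auto
  qed
  have "C * (1/2::real) ^ m < ee" if "m \<ge> N" for m
  proof -
    have "(1/2::real) ^ m \<le> (1/2) ^ N" using that by (intro power_decreasing) auto
    then have "C * (1/2::real) ^ m \<le> (C + 1) * (1/2) ^ N"
      using \<open>C \<ge> 0\<close> by (intro mult_mono) auto
    also have "\<dots> < ee" using N \<open>C \<ge> 0\<close> by (simp add: field_simps)
    finally show ?thesis .
  qed
  then show ?thesis by blast
qed

context dimc begin

lemma pn_tail:
  assumes "\<And>i. norm (b i) \<le> K" "m \<le> p"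
  shows "pn (\<Sum>i\<in>{m..<p}. s (b i) (x i)) \<le> K powr q * 2 powr q * (2 * (1/2) ^ (m * m))"
proof -
  have K0: "0 \<le> K" using assms(1)[of 0] norm_ge_zero order_trans by blast
  have "pn (\<Sum>i\<in>{m..<p}. s (b i) (x i)) \<le> (\<Sum>i\<in>{m..<p}. pn (s (b i) (x i)))"
    by (rule pn_sum) (auto intro: xE)
  also have "\<dots> = (\<Sum>i\<in>{m..<p}. norm (b i) powr q * pn (x i))"
    by (rule sum.cong) (auto simp: pn_scale[OF xE])
  also have "\<dots> \<le> (\<Sum>i\<in>{m..<p}. K powr q * (2 powr q * (1/2) ^ (i * i)))"
  proof (rule sum_mono)
    fix i
    show "norm (b i) powr q * pn (x i) \<le> K powr q * (2 powr q * (1/2) ^ (i * i))"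
    proof (rule mult_mono)
      show "norm (b i) powr q \<le> K powr q" using assms(1)[of i] q0 by (intro powr_mono2) auto
    qed (auto simp: pn_x pn_nonneg)
  qed
  also have "\<dots> = K powr q * 2 powr q * (\<Sum>i\<in>{m..<p}. (1/2) ^ (i * i))"
    by (simp add: sum_distrib_left mult.assoc)
  also have "\<dots> \<le> K powr q * 2 powr q * (2 * (1/2) ^ (m * m))"
    by (rule mult_left_mono) (use geo_tail2[OF assms(2)] in auto)
  finally show ?thesis .
qed

definition ind :: "nat set \<Rightarrow> nat \<Rightarrow> 'a" where "ind M i = (if i \<in> M then 1 else 0)"

lemma norm_ind: "norm (ind M i) \<le> 1" by (simp add: ind_def)

definition PS :: "nat set \<Rightarrow> nat \<Rightarrow> 'b" where "PS M m = (\<Sum>i<m. s (ind M i) (x i))"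

lemma PS_X: "PS M m \<in> X"
  unfolding PS_def by (intro subspace_sum[OF Xsub] subspace_scale[OF Xsub] xX)

lemma PS_E: "PS M m \<in> E" using PS_X XE by blast

lemma PS_diff: "m \<le> p \<Longrightarrow> PS M p - PS M m = (\<Sum>i\<in>{m..<p}. s (ind M i) (x i))"
  unfolding PS_def by (simp add: sum_split_nat[of m p])

lemma PS_cauchy: "\<exists>y\<in>E. (\<lambda>m. pn (PS M m - y)) \<longlonglongrightarrow> 0"
proof (rule complete_pn)
  show "PS M m \<in> E" for m by (rule PS_E)
  fix \<epsilon> :: real assume \<epsilon>: "\<epsilon> > 0"
  define C where "C = 1 powr q * 2 powr q * 2"
  have C0: "C \<ge> 0" by (simp add: C_def)
  obtain N where N: "\<And>m. m \<ge> N \<Longrightarrow> C * (1/2) ^ m < \<epsilon>" using half_pow_small[OF C0 \<epsilon>] by blast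
  have bnd: "pn (PS M p - PS M m) < \<epsilon>" if "m \<ge> N" "m \<le> p" for m p
  proof -
    have "pn (PS M p - PS M m) \<le> 1 powr q * 2 powr q * (2 * (1/2) ^ (m * m))"
      unfolding PS_diff[OF that(2)] by (rule pn_tail) (auto simp: norm_ind that)
    also have "\<dots> = C * (1/2) ^ (m * m)" by (simp add: C_def)
    also have "\<dots> \<le> C * (1/2) ^ m"
      using C0 by (intro mult_left_mono power_decreasing) (auto simp: le_square)
    also have "\<dots> < \<epsilon>" using N that(1) by blast
    finally show ?thesis .
  qed
  show "\<exists>N. \<forall>m\<ge>N. \<forall>p\<ge>N. pn (PS M m - PS M p) < \<epsilon>"
  proof (intro exI allI impI)
    fix m p assume "m \<ge> N" "p \<ge> N"
    show "pn (PS M m - PS M p) < \<epsilon>"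
    proof (cases "m \<le> p")
      case True
      then show ?thesis using bnd[of m p] \<open>m \<ge> N\<close> pn_commute[OF PS_E PS_E] by metis
    next
      case False
      then show ?thesis using bnd[of p m] \<open>p \<ge> N\<close> by simp
    qed
  qed
qed

definition g :: "nat set \<Rightarrow> 'b" where "g M = (SOME y. y \<in> E \<and> (\<lambda>m. pn (PS M m - y)) \<longlonglongrightarrow> 0)"

lemma g_lim: "g M \<in> E" "(\<lambda>m. pn (PS M m - g M)) \<longlonglongrightarrow> 0"
proof -
  have "\<exists>y. y \<in> E \<and> (\<lambda>m. pn (PS M m - y)) \<longlonglongrightarrow> 0" using PS_cauchy by blast
  from someI_ex[OF this] show "g M \<in> E" "(\<lambda>m. pn (PS M m - g M)) \<longlonglongrightarrow> 0"
    unfolding g_def by auto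
qed

lemma g_X: "g M \<in> X"
  by (rule Xcl[of "PS M"]) (auto simp: PS_X g_lim)

end

context dimc begin

lemma core:
  fixes M :: "'r \<Rightarrow> nat set" and T :: "'r set" and c :: "'r \<Rightarrow> 'a"
  assumes fin: "finite T" and sum0: "(\<Sum>t\<in>T. s (c t) (g (M t))) = 0"
    and t1: "t1 \<in> T" "c t1 \<noteq> 0"
    and sep: "\<And>N0. \<exists>N\<ge>N0. N \<in> M t1 \<and> (\<forall>t\<in>T-{t1}. N \<notin> M t)"
  shows False
proof -
  define b where "b i = (\<Sum>t\<in>T. c t * ind (M t) i)" for i
  define K where "K = (\<Sum>t\<in>T. norm (c t))"
  have bK: "norm (b i) \<le> K" for i
  proof -
    have "norm (b i) \<le> (\<Sum>t\<in>T. norm (c t * ind (M t) i))" unfolding b_def by (rule norm_sum)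
    also have "\<dots> \<le> K" unfolding K_def
      by (rule sum_mono) (simp add: norm_mult ind_def)
    finally show ?thesis .
  qed
  define S where "S m = (\<Sum>t\<in>T. s (c t) (PS (M t) m))" for m
  have S_eq: "S m = (\<Sum>i<m. s (b i) (x i))" for m
  proof -
    have "S m = (\<Sum>t\<in>T. \<Sum>i<m. s (c t * ind (M t) i) (x i))"
      unfolding S_def PS_def by (simp add: scale_sum_right)
    also have "\<dots> = (\<Sum>i<m. \<Sum>t\<in>T. s (c t * ind (M t) i) (x i))" by (rule sum.swap)
    also have "\<dots> = (\<Sum>i<m. s (b i) (x i))" unfolding b_def by (simp add: scale_sum_left)
    finally show ?thesis .
  qed
  have SE: "S m \<in> E" for m unfolding S_def by (intro Esum Escale PS_E) (use fin in auto)
  have S0: "(\<lambda>m. pn (S m)) \<longlonglongrightarrow> 0"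
  proof (rule tendsto_sandwich[of "\<lambda>_. 0" _ _ "\<lambda>m. \<Sum>t\<in>T. norm (c t) powr q * pn (PS (M t) m - g (M t))"])
    show "\<forall>\<^sub>F m in sequentially. 0 \<le> pn (S m)" by (simp add: pn_nonneg)
    show "\<forall>\<^sub>F m in sequentially. pn (S m) \<le> (\<Sum>t\<in>T. norm (c t) powr q * pn (PS (M t) m - g (M t)))"
    proof (intro always_eventually allI)
      fix m
      have "S m = S m - (\<Sum>t\<in>T. s (c t) (g (M t)))" using sum0 by simp
      also have "\<dots> = (\<Sum>t\<in>T. s (c t) (PS (M t) m - g (M t)))"
        unfolding S_def by (simp add: sum_subtractf scale_right_diff_distrib)
      finally have eq: "S m = (\<Sum>t\<in>T. s (c t) (PS (M t) m - g (M t)))" .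
      have "pn (S m) \<le> (\<Sum>t\<in>T. pn (s (c t) (PS (M t) m - g (M t))))"
        unfolding eq by (rule pn_sum[OF fin]) (intro Escale Ediff PS_E g_lim)
      also have "\<dots> = (\<Sum>t\<in>T. norm (c t) powr q * pn (PS (M t) m - g (M t)))"
        by (rule sum.cong) (auto intro!: pn_scale Ediff PS_E g_lim)
      finally show "pn (S m) \<le> (\<Sum>t\<in>T. norm (c t) powr q * pn (PS (M t) m - g (M t)))" .
    qed
    have "(\<lambda>m. \<Sum>t\<in>T. norm (c t) powr q * pn (PS (M t) m - g (M t))) \<longlonglongrightarrow> (\<Sum>t\<in>T. norm (c t) powr q * 0)"
      by (intro tendsto_sum tendsto_mult tendsto_const g_lim)
    then show "(\<lambda>m. \<Sum>t\<in>T. norm (c t) powr q * pn (PS (M t) m - g (M t))) \<longlonglongrightarrow> 0" by simp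
  qed simp
  define c1 where "c1 = norm (c t1) powr q"
  have c1: "c1 > 0" using t1(2) by (simp add: c1_def)
  define C where "C = K powr q * 2 powr q * 2"
  have C0: "C \<ge> 0" by (simp add: C_def)
  obtain N0 where N0: "\<And>m. m \<ge> N0 \<Longrightarrow> C * (1/2) ^ m < c1" using half_pow_small[OF C0 c1] by blast
  obtain N where N: "N \<ge> N0" "N \<in> M t1" "\<And>t. t \<in> T - {t1} \<Longrightarrow> N \<notin> M t" using sep[of N0] by blast
  have bN: "b N = c t1"
  proof -
    have "b N = c t1 * ind (M t1) N + (\<Sum>t\<in>T - {t1}. c t * ind (M t) N)"
      unfolding b_def using sum.remove[OF fin t1(1)] by blast
    also have "(\<Sum>t\<in>T - {t1}. c t * ind (M t) N) = 0"
      by (rule sum.neutral) (use N(3) in \<open>auto simp: ind_def\<close>)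
    finally show ?thesis using N(2) by (simp add: ind_def)
  qed
  define H where "H = (\<Sum>i<N. s (b i) (x i))"
  have HF: "H \<in> F N" unfolding H_def F_def
  proof (intro span_sum span_scale)
    fix i assume "i \<in> {..<N}"
    then have "x i \<in> F N" using x_F[of i] F_mono[of "Suc i" N] by auto
    then show "x i \<in> span (e ` {..<N})" unfolding F_def .
  qed
  have HE: "H \<in> E" using HF FE by blast
  define R where "R m = (\<Sum>i\<in>{Suc N..<m}. s (b i) (x i))" for m
  have RE: "R m \<in> E" for m unfolding R_def by (intro Esum Escale xE) auto
  have lowA: "c1 * (1/2) ^ (N * N) \<le> pn (S m) + C * (1/2) ^ (Suc N * Suc N)" if m: "m \<ge> Suc N" for m
  proof -
    have dec: "S m = s (c t1) (x N) + H + R m"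
    proof -
      have "S m = (\<Sum>i<Suc N. s (b i) (x i)) + R m"
        unfolding S_eq R_def by (rule sum_split_nat[OF m])
      also have "(\<Sum>i<Suc N. s (b i) (x i)) = H + s (b N) (x N)" unfolding H_def by simp
      finally show ?thesis using bN by (simp add: algebra_simps)
    qed
    have "(norm (c t1) * \<delta> N) powr q \<le> pn (s (c t1) (x N) + H)"
      unfolding pn_def using x_lower[OF HF t1(2)] q0 \<delta>_pos[of N]
      by (intro powr_mono2) (auto intro!: mult_nonneg_nonneg less_imp_le)
    moreover have "(norm (c t1) * \<delta> N) powr q = c1 * (1/2) ^ (N * N)"
      unfolding c1_def using \<delta>_powr[of N] \<delta>_pos[of N] by (simp add: powr_mult)
    moreover have "pn (s (c t1) (x N) + H) = pn (S m - R m)" using dec by simp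
    moreover have "pn (S m - R m) \<le> pn (S m) + pn (R m)" by (rule pn_diff[OF SE RE])
    moreover have "pn (R m) \<le> C * (1/2) ^ (Suc N * Suc N)"
    proof -
      have "pn (R m) \<le> K powr q * 2 powr q * (2 * (1/2) ^ (Suc N * Suc N))"
        unfolding R_def by (rule pn_tail[OF bK]) (use m in simp)
      then show ?thesis by (simp add: C_def mult.assoc mult.left_commute)
    qed
    ultimately show ?thesis by linarith
  qed
  have "c1 * (1/2) ^ (N * N) \<le> 0 + C * (1/2) ^ (Suc N * Suc N)"
  proof (rule tendsto_lowerbound)
    show "(\<lambda>m. pn (S m) + C * (1/2) ^ (Suc N * Suc N)) \<longlonglongrightarrow> 0 + C * (1/2) ^ (Suc N * Suc N)"
      by (intro tendsto_add S0 tendsto_const)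
    show "\<forall>\<^sub>F m in sequentially. c1 * (1/2) ^ (N * N) \<le> pn (S m) + C * (1/2) ^ (Suc N * Suc N)"
      using lowA eventually_sequentially by blast
  qed simp
  moreover have "C * (1/2::real) ^ (Suc N * Suc N) \<le> C * ((1/2) ^ (N * N) * (1/2) ^ N)"
  proof (rule mult_left_mono[OF _ C0])
    have "(1/2::real) ^ (Suc N * Suc N) \<le> (1/2) ^ (N * N + N)"
      by (intro power_decreasing) auto
    then show "(1/2::real) ^ (Suc N * Suc N) \<le> (1/2) ^ (N * N) * (1/2) ^ N" by (simp add: power_add)
  qed
  moreover have "C * ((1/2::real) ^ (N * N) * (1/2) ^ N) < c1 * (1/2) ^ (N * N)"
  proof -
    have "C * (1/2::real) ^ N < c1" using N0 N(1) by blast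
    then have "(C * (1/2::real) ^ N) * (1/2) ^ (N * N) < c1 * (1/2) ^ (N * N)"
      by (intro mult_strict_right_mono) auto
    then show ?thesis by (simp add: algebra_simps)
  qed
  ultimately show False by linarith
qed

end

definition Mr :: "real \<Rightarrow> nat set" where
  "Mr t = range (\<lambda>k. prod_encode (k, int_encode \<lfloor>t * 2 ^ k\<rfloor>))"

lemma floor_eq_close: "\<lfloor>a::real\<rfloor> = \<lfloor>b\<rfloor> \<Longrightarrow> \<bar>a - b\<bar> < 1"
proof -
  assume h: "\<lfloor>a\<rfloor> = \<lfloor>b\<rfloor>"
  have "of_int \<lfloor>a\<rfloor> \<le> a" "a < of_int \<lfloor>a\<rfloor> + 1" "of_int \<lfloor>b\<rfloor> \<le> b" "b < of_int \<lfloor>b\<rfloor> + 1"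
    by linarith+
  then show ?thesis using h by linarith
qed

lemma floor_sep:
  assumes "t \<noteq> (t1::real)"
  shows "\<exists>k0. \<forall>k\<ge>k0. \<lfloor>t * 2 ^ k\<rfloor> \<noteq> \<lfloor>t1 * 2 ^ k\<rfloor>"
proof -
  have d: "\<bar>t - t1\<bar> > 0" using assms by simp
  obtain k0 where k0: "1 / \<bar>t - t1\<bar> < 2 ^ k0" using real_arch_pow[of 2 "1 / \<bar>t - t1\<bar>"] by auto
  have "\<lfloor>t * 2 ^ k\<rfloor> \<noteq> \<lfloor>t1 * 2 ^ k\<rfloor>" if "k \<ge> k0" for k
  proof
    assume "\<lfloor>t * 2 ^ k\<rfloor> = \<lfloor>t1 * 2 ^ k\<rfloor>"
    then have "\<bar>t * 2 ^ k - t1 * 2 ^ k\<bar> < 1" by (rule floor_eq_close)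
    then have lt: "\<bar>t - t1\<bar> * 2 ^ k < 1" by (simp add: abs_mult left_diff_distrib[symmetric])
    have "(2::real) ^ k0 \<le> 2 ^ k" using that by (intro power_increasing) auto
    then have "1 / \<bar>t - t1\<bar> < 2 ^ k" using k0 by linarith
    then have "1 < \<bar>t - t1\<bar> * 2 ^ k" using d by (simp add: field_simps)
    then show False using lt by linarith
  qed
  then show ?thesis by blast
qed

lemma fin_bound:
  assumes "finite A" "\<forall>a\<in>A. \<exists>k0::nat. \<forall>k\<ge>k0. P a k"
  shows "\<exists>K. \<forall>a\<in>A. \<forall>k\<ge>K. P a k"
  using assms
proof (induction A rule: finite_induct)
  case empty
  then show ?case by simp
next
  case (insert x A)
  then obtain K where K: "\<forall>a\<in>A. \<forall>k\<ge>K. P a k" by blast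
  obtain k0 where k0: "\<forall>k\<ge>k0. P x k" using insert.prems by blast
  show ?case
  proof (intro exI[of _ "max K k0"] ballI allI impI)
    fix a k assume "a \<in> insert x A" "max K k0 \<le> k"
    then show "P a k" using K k0 by auto
  qed
qed

lemma Mr_sep:
  assumes "finite T" "t1 \<in> T"
  shows "\<exists>N\<ge>N0. N \<in> Mr t1 \<and> (\<forall>t\<in>T-{t1}. N \<notin> Mr t)"
proof -
  have all: "\<forall>t\<in>T-{t1}. \<exists>k0. \<forall>k\<ge>k0. \<lfloor>t * 2 ^ k\<rfloor> \<noteq> \<lfloor>t1 * 2 ^ k\<rfloor>"
  proof
    fix t assume "t \<in> T - {t1}"
    then have "t \<noteq> t1" by simp
    then show "\<exists>k0. \<forall>k\<ge>k0. \<lfloor>t * 2 ^ k\<rfloor> \<noteq> \<lfloor>t1 * 2 ^ k\<rfloor>" by (rule floor_sep)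
  qed
  obtain K where K: "\<forall>t\<in>T-{t1}. \<forall>k\<ge>K. \<lfloor>t * 2 ^ k\<rfloor> \<noteq> \<lfloor>t1 * 2 ^ k\<rfloor>"
    using fin_bound[where P="\<lambda>t k. \<lfloor>t * 2 ^ k\<rfloor> \<noteq> \<lfloor>t1 * 2 ^ k\<rfloor>", OF finite_Diff[OF assms(1)] all]
    by (elim exE)
  define k where "k = max K N0"
  have kK: "k \<ge> K" and kN: "k \<ge> N0" by (simp_all add: k_def)
  define N where "N = prod_encode (k, int_encode \<lfloor>t1 * 2 ^ k\<rfloor>)"
  have "N \<ge> N0" unfolding N_def using le_prod_encode_1[of k "int_encode \<lfloor>t1 * 2 ^ k\<rfloor>"] kN by linarith
  moreover have "N \<in> Mr t1" unfolding N_def Mr_def by (rule rangeI)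
  moreover have "N \<notin> Mr t" if t: "t \<in> T - {t1}" for t
  proof
    assume "N \<in> Mr t"
    then obtain k' where "N = prod_encode (k', int_encode \<lfloor>t * 2 ^ k'\<rfloor>)" unfolding Mr_def by (elim rangeE)
    then have "(k, int_encode \<lfloor>t1 * 2 ^ k\<rfloor>) = (k', int_encode \<lfloor>t * 2 ^ k'\<rfloor>)"
      unfolding N_def prod_encode_eq .
    then have kk: "k' = k" and "\<lfloor>t1 * 2 ^ k\<rfloor> = \<lfloor>t * 2 ^ k'\<rfloor>" by (auto simp: int_encode_eq)
    then have "\<lfloor>t * 2 ^ k\<rfloor> = \<lfloor>t1 * 2 ^ k\<rfloor>" by simp
    moreover have "\<lfloor>t * 2 ^ k\<rfloor> \<noteq> \<lfloor>t1 * 2 ^ k\<rfloor>" using K t kK by simp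
    ultimately show False by simp
  qed
  ultimately show ?thesis by blast
qed

context dimc begin

definition G :: "real \<Rightarrow> 'b" where "G t = g (Mr t)"

lemma G_X: "G t \<in> X" unfolding G_def by (rule g_X)

lemma G_inj: "inj G"
proof (rule injI, rule ccontr)
  fix t t' assume eq: "G t = G t'" and ne: "t \<noteq> t'"
  define c where "c u = (if u = t then (1::'a) else -1)" for u
  have "(\<Sum>u\<in>{t, t'}. s (c u) (g (Mr u))) = G t - G t'"
    using ne by (simp add: c_def G_def)
  also have "\<dots> = 0" using eq by simp
  finally have s0: "(\<Sum>u\<in>{t, t'}. s (c u) (g (Mr u))) = 0" .
  have f2: "finite {t, t'}" by simp
  have tin: "t \<in> {t, t'}" by simp
  have ct: "c t \<noteq> 0" by (simp add: c_def)
  show False by (rule core[OF f2 s0 tin ct Mr_sep[OF f2 tin]])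
qed

lemma G_indep: "\<not> dependent (range G)"
proof
  assume "dependent (range G)"
  then obtain T u where T: "finite T" "T \<subseteq> range G" "(\<Sum>v\<in>T. s (u v) v) = 0" and v0ex: "\<exists>v\<in>T. u v \<noteq> 0"
    unfolding dependent_explicit by (elim exE conjE) 
  obtain v0 where v0: "v0 \<in> T" "u v0 \<noteq> 0" using v0ex by (elim bexE)
  define T' where "T' = G -` T"
  have fT': "finite T'" unfolding T'_def using finite_vimageI[OF T(1) G_inj] .
  have TT': "T = G ` T'" unfolding T'_def using T(2) by (simp add: image_vimage_eq inf_absorb2 Int_absorb2)
  have injT': "inj_on G T'" using G_inj by (simp add: inj_on_def inj_def)
  have "(\<Sum>t\<in>T'. s (u (G t)) (g (Mr t))) = (\<Sum>v\<in>T. s (u v) v)"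
    unfolding TT' using sum.reindex[OF injT', of "\<lambda>v. s (u v) v"] by (simp add: G_def o_def)
  then have s0: "(\<Sum>t\<in>T'. s (u (G t)) (g (Mr t))) = 0" using T(3) by simp
  obtain t1 where t1: "t1 \<in> T'" "G t1 = v0" using v0(1) unfolding TT' by (elim imageE) simp
  have ct: "u (G t1) \<noteq> 0" using t1(2) v0(2) by simp
  show False by (rule core[OF fT' s0 t1(1) ct Mr_sep[OF fT' t1(1)]])
qed

lemma lower_bound: "\<exists>I. I \<subseteq> X \<and> \<not> dependent I \<and> I \<approx> (UNIV :: real set)"
proof (intro exI conjI)
  show "range G \<subseteq> X" using G_X by blast
  show "\<not> dependent (range G)" by (rule G_indep)
  show "range G \<approx> (UNIV :: real set)" using inj_on_image_eqpoll_self[of G UNIV] G_inj by simp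
qed

end

context qns begin

definition phi :: "(nat \<Rightarrow> 'v) \<Rightarrow> nat \<times> (nat \<Rightarrow> 'k) \<Rightarrow> 'v" where
  "phi d p = (\<Sum>i<fst p. s (snd p i) (d i))"

lemma phi_pad:
  fixes m p :: nat and d :: "nat \<Rightarrow> 'v" and c :: "nat \<Rightarrow> 'k"
  assumes "m \<le> p"
  shows "(\<Sum>i<p. s (if i < m then c i else 0) (d i)) = (\<Sum>i<m. s (c i) (d i))"
proof -
  have "(\<Sum>i<p. s (if i < m then c i else 0) (d i)) =
        (\<Sum>i<m. s (if i < m then c i else 0) (d i)) + (\<Sum>i\<in>{m..<p}. s (if i < m then c i else 0) (d i))"
    by (rule sum_split_nat[OF assms])
  also have "(\<Sum>i\<in>{m..<p}. s (if i < m then c i else 0) (d i)) = 0"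
    by (rule sum.neutral) auto
  also have "(\<Sum>i<m. s (if i < m then c i else 0) (d i)) = (\<Sum>i<m. s (c i) (d i))"
    by (rule sum.cong) auto
  finally show ?thesis by simp
qed

lemma span_range_phi: "span (range d) \<subseteq> range (phi d)" for d :: "nat \<Rightarrow> 'v"
proof (rule span_minimal)
  show "range d \<subseteq> range (phi d)"
  proof
    fix v assume "v \<in> range d"
    then obtain k where k: "v = d k" by blast
    have "phi d (Suc k, \<lambda>i. if i = k then 1 else 0) = (\<Sum>i<Suc k. (if i = k then d i else 0))"
      unfolding phi_def by (intro sum.cong) auto
    also have "\<dots> = d k" by simp
    finally show "v \<in> range (phi d)" using k by (metis rangeI)
  qed
  show "subspace (range (phi d))" unfolding subspace_def
  proof (intro conjI ballI allI)
    show "0 \<in> range (phi d)" using rangeI[of "phi d" "(0, \<lambda>_. 0)"] by (simp add: phi_def)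
    fix u v assume uin: "u \<in> range (phi d)" and vin: "v \<in> range (phi d)"
    obtain pu where pu: "u = phi d pu" using uin by (elim rangeE)
    obtain m c where mc: "pu = (m, c)" by (cases pu)
    obtain pv where pv: "v = phi d pv" using vin by (elim rangeE)
    obtain m' c' where mc': "pv = (m', c')" by (cases pv)
    have u: "u = phi d (m, c)" using pu mc by simp
    have v: "v = phi d (m', c')" using pv mc' by simp
    define p where "p = max m m'"
    have "u = (\<Sum>i<p. s (if i < m then c i else 0) (d i))"
      unfolding u phi_def p_def by (simp add: phi_pad)
    moreover have "v = (\<Sum>i<p. s (if i < m' then c' i else 0) (d i))"
      unfolding v phi_def p_def by (simp add: phi_pad)
    ultimately have "u + v = phi d (p, \<lambda>i. (if i < m then c i else 0) + (if i < m' then c' i else 0))"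
      unfolding phi_def by (simp add: sum.distrib[symmetric] scale_left_distrib)
    then show "u + v \<in> range (phi d)" by (metis rangeI)
  next
    fix a v assume vin: "v \<in> range (phi d)"
    obtain pv where pv: "v = phi d pv" using vin by (elim rangeE)
    obtain m c where mc: "pv = (m, c)" by (cases pv)
    have v: "v = phi d (m, c)" using pv mc by simp
    have "s a v = phi d (m, \<lambda>i. a * c i)" unfolding v phi_def by (simp add: scale_sum_right)
    then show "s a v \<in> range (phi d)" by (metis rangeI)
  qed
qed

lemma phi_E: "range d \<subseteq> E \<Longrightarrow> phi d p \<in> E" for d :: "nat \<Rightarrow> 'v"
  unfolding phi_def by (intro Esum Escale) auto

lemma closure_lepoll:
  fixes d :: "nat \<Rightarrow> 'v"
  assumes dE: "range d \<subseteq> E"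
  shows "qnorm_topology E n closure_of span (range d) \<lesssim> (UNIV :: (nat \<Rightarrow> nat \<times> (nat \<Rightarrow> 'k)) set)"
proof -
  let ?Y = "qnorm_topology E n closure_of span (range d)"
  have spE: "span (range d) \<subseteq> E" by (rule span_subE[OF dE])
  have ex: "\<exists>w. (\<lambda>m. pn (phi d (w m) - x)) \<longlonglongrightarrow> 0" if "x \<in> ?Y" for x
  proof -
    have "x \<in> E \<and> (\<exists>y. (\<forall>m. y m \<in> span (range d)) \<and> (\<lambda>m. pn (y m - x)) \<longlonglongrightarrow> 0)"
      using that in_closure_seq[OF spE, of x] by simp
    then obtain y where y: "\<forall>m. y m \<in> span (range d)" "(\<lambda>m. pn (y m - x)) \<longlonglongrightarrow> 0"
      by (elim conjE exE) simp
    have "\<forall>m. \<exists>p. phi d p = y m"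
    proof
      fix m
      have "y m \<in> range (phi d)" using y(1) span_range_phi by (meson subsetD)
      then obtain p where "y m = phi d p" by (elim rangeE)
      then show "\<exists>p. phi d p = y m" by (intro exI[of _ p]) simp
    qed
    then obtain w where "\<And>m. phi d (w m) = y m" by metis
    then show ?thesis using y(2) by (intro exI[of _ w]) simp
  qed
  define Phi where "Phi x = (SOME w. (\<lambda>m. pn (phi d (w m) - x)) \<longlonglongrightarrow> 0)" for x
  have Phi: "(\<lambda>m. pn (phi d (Phi x m) - x)) \<longlonglongrightarrow> 0" if "x \<in> ?Y" for x
    unfolding Phi_def by (rule someI_ex[OF ex[OF that]])
  have YE: "?Y \<subseteq> E"
  proof
    fix x assume "x \<in> ?Y"
    then show "x \<in> E" using in_closure_seq[OF spE, of x] by simp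
  qed
  have "inj_on Phi ?Y"
  proof (rule inj_onI)
    fix x x' assume x: "x \<in> ?Y" and x': "x' \<in> ?Y" and eq: "Phi x = Phi x'"
    show "x = x'"
    proof (rule lim_unique[of x x' "\<lambda>m. phi d (Phi x m)"])
      show "x \<in> E" "x' \<in> E" using x x' YE by auto
      show "phi d (Phi x m) \<in> E" for m by (rule phi_E[OF dE])
      show "(\<lambda>m. pn (phi d (Phi x m) - x)) \<longlonglongrightarrow> 0" by (rule Phi[OF x])
      show "(\<lambda>m. pn (phi d (Phi x m) - x')) \<longlonglongrightarrow> 0" unfolding eq by (rule Phi[OF x'])
    qed
  qed
  then show ?thesis unfolding lepoll_def by blast
qed

end

definition enc :: "('k \<Rightarrow> nat set) \<Rightarrow> (nat \<Rightarrow> nat \<times> (nat \<Rightarrow> 'k)) \<Rightarrow> nat set" where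
  "enc \<kappa> F = range (\<lambda>i. prod_encode (0, prod_encode (i, fst (F i)))) \<union>
     {prod_encode (Suc 0, prod_encode (i, prod_encode (j, l))) | i j l. l \<in> \<kappa> (snd (F i) j)}"

lemma enc_inj:
  assumes "inj \<kappa>"
  shows "inj (enc \<kappa>)"
proof (rule injI)
  fix F F' assume eq: "enc \<kappa> F = enc \<kappa> F'"
  show "F = F'"
  proof
    fix i
    have "prod_encode (0, prod_encode (i, fst (F i))) \<in> enc \<kappa> F" unfolding enc_def by blast
    then have "prod_encode (0, prod_encode (i, fst (F i))) \<in> enc \<kappa> F'" using eq by simp
    then have "fst (F i) = fst (F' i)" unfolding enc_def by auto
    moreover have "snd (F i) = snd (F' i)"
    proof
      fix j
      have "l \<in> \<kappa> (snd (F i) j) \<longleftrightarrow> l \<in> \<kappa> (snd (F' i) j)" for l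
      proof -
        have "l \<in> \<kappa> (snd (F i) j) \<longleftrightarrow> prod_encode (Suc 0, prod_encode (i, prod_encode (j, l))) \<in> enc \<kappa> F"
          unfolding enc_def by auto
        moreover have "l \<in> \<kappa> (snd (F' i) j) \<longleftrightarrow> prod_encode (Suc 0, prod_encode (i, prod_encode (j, l))) \<in> enc \<kappa> F'"
          unfolding enc_def by auto
        ultimately show ?thesis using eq by simp
      qed
      then have "\<kappa> (snd (F i) j) = \<kappa> (snd (F' i) j)" by blast
      then show "snd (F i) j = snd (F' i) j" using assms by (simp add: inj_eq)
    qed
    ultimately show "F i = F' i" by (simp add: prod_eq_iff)
  qed
qed

lemma seqspace_lepoll_real:
  assumes "inj (\<kappa> :: 'k \<Rightarrow> nat set)"
  shows "(UNIV :: (nat \<Rightarrow> nat \<times> (nat \<Rightarrow> 'k)) set) \<lesssim> (UNIV :: real set)"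
proof -
  have "(UNIV :: (nat \<Rightarrow> nat \<times> (nat \<Rightarrow> 'k)) set) \<lesssim> (UNIV :: nat set set)"
    unfolding lepoll_def using enc_inj[OF assms] by blast
  also have "(UNIV :: nat set set) \<approx> (UNIV :: real set)" by (rule nat_sets_eqpoll_reals)
  finally show ?thesis .
qed

lemma real_kappa: "\<exists>\<kappa> :: real \<Rightarrow> nat set. inj \<kappa>"
proof -
  have "(UNIV :: real set) \<approx> (UNIV :: nat set set)" using nat_sets_eqpoll_reals eqpoll_sym by blast
  then obtain f :: "real \<Rightarrow> nat set" where "bij_betw f UNIV UNIV" unfolding eqpoll_def by blast
  then show ?thesis using bij_betw_imp_inj_on by blast
qed

lemma complex_kappa: "\<exists>\<kappa> :: complex \<Rightarrow> nat set. inj \<kappa>"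
proof -
  obtain \<kappa> :: "real \<Rightarrow> nat set" where k: "inj \<kappa>" using real_kappa by blast
  define \<kappa>c where "\<kappa>c z = (\<lambda>i. 2 * i) ` \<kappa> (Re z) \<union> (\<lambda>i. 2 * i + 1) ` \<kappa> (Im z)" for z
  have "inj \<kappa>c"
  proof (rule injI)
    fix z w assume eq: "\<kappa>c z = \<kappa>c w"
    have ne: "Suc (2 * x) \<noteq> 2 * y" for x y :: nat by presburger
    have ev: "(\<lambda>i. 2 * i) ` \<kappa> (Re z) = {a \<in> \<kappa>c z. even a}" for z
      unfolding \<kappa>c_def by auto
    have od: "\<kappa> (Im z) = {i. 2 * i + 1 \<in> \<kappa>c z}" for z
      unfolding \<kappa>c_def using ne by auto
    have re: "\<kappa> (Re z) = {i. 2 * i \<in> \<kappa>c z}" for z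
      unfolding \<kappa>c_def using ne by (auto dest: sym)
    have "\<kappa> (Re z) = \<kappa> (Re w)" "\<kappa> (Im z) = \<kappa> (Im w)" using eq re od by simp_all
    then have "Re z = Re w" "Im z = Im w" using k by (simp_all add: inj_eq)
    then show "z = w" by (simp add: complex_eq_iff)
  qed
  then show ?thesis by blast
qed

lemma vs_seq: "vector_space sW \<Longrightarrow> vector_space (seq_scale sW)"
  unfolding vector_space_def seq_scale_def by (auto simp: fun_eq_iff)

lemma vs_fun: "vector_space s \<Longrightarrow> vector_space (fun_scale s)"
  unfolding vector_space_def fun_scale_def by (auto simp: fun_eq_iff)

definition Nk :: "nat \<Rightarrow> nat set" where "Nk k = range (\<lambda>i. prod_encode (k, i))"

lemma Nk_inf: "infinite (Nk k)"
  unfolding Nk_def by (rule range_inj_infinite) (simp add: inj_on_def)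

lemma Nk_disj: "k \<noteq> m \<Longrightarrow> p \<in> Nk k \<Longrightarrow> p \<notin> Nk m"
  unfolding Nk_def by auto

definition Sp :: "nat \<Rightarrow> (nat \<Rightarrow> 'w::zero) \<Rightarrow> nat \<Rightarrow> 'w" where
  "Sp k a = (\<lambda>p. if p \<in> Nk k then a (inv (enumerate (Nk k)) p) else 0)"

lemma Sp_enum: "Sp k a (enumerate (Nk k) i) = a i"
  unfolding Sp_def using enumerate_in_set[OF Nk_inf] inv_f_f[OF inj_enumerate[OF Nk_inf]] by simp

lemma Sp_out: "p \<notin> Nk k \<Longrightarrow> Sp k a p = 0"
  unfolding Sp_def by simp

lemma Sp_V:
  assumes sp: "spreading_qspace sW q V nV" and a: "a \<in> V"
  shows "Sp k a \<in> V \<and> nV (Sp k a) \<le> nV a"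
proof -
  have "\<forall>a\<in>V. \<forall>N0::nat set. infinite N0 \<longrightarrow>
        (\<forall>b. (\<forall>i. b (enumerate N0 i) = a i) \<and> (\<forall>k. k \<notin> N0 \<longrightarrow> b k = 0) \<longrightarrow> b \<in> V \<and> nV b \<le> nV a)"
    using sp unfolding spreading_qspace_def by blast
  then have H: "(\<forall>i. b (enumerate (Nk k) i) = a i) \<and> (\<forall>p. p \<notin> Nk k \<longrightarrow> b p = 0) \<Longrightarrow> b \<in> V \<and> nV b \<le> nV a" for b
    using a Nk_inf[of k] by blast
  show ?thesis by (rule H) (simp add: Sp_enum Sp_out)
qed

lemma Sp_add: "Sp k (a + b) = Sp k a + Sp k b" for a b :: "nat \<Rightarrow> 'w::monoid_add"
  unfolding Sp_def by (auto simp: fun_eq_iff)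

lemma Sp_scale: "vector_space sW \<Longrightarrow> Sp k (seq_scale sW c a) = seq_scale sW c (Sp k a)"
proof -
  assume "vector_space sW"
  then have "module sW" by (simp add: module_iff_vector_space)
  then have z: "sW c 0 = 0" by (rule module.scale_zero_right)
  show ?thesis unfolding Sp_def seq_scale_def by (auto simp: fun_eq_iff z)
qed

lemma Sp_bounded:
  fixes sW :: "'k::real_normed_field \<Rightarrow> 'w::ab_group_add \<Rightarrow> 'w"
  assumes "vector_space sW" "spreading_qspace sW q V nV"
  shows "bounded_op (seq_scale sW) V nV (Sp k)"
  unfolding bounded_op_def
proof (intro conjI ballI allI exI[of _ 1])
  show "Sp k x \<in> V" if "x \<in> V" for x using Sp_V[OF assms(2) that] by simp
  show "Sp k (x + y) = Sp k x + Sp k y" for x y :: "nat \<Rightarrow> 'w" unfolding Sp_def by (auto simp: fun_eq_iff)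
  show "Sp k (seq_scale sW c x) = seq_scale sW c (Sp k x)" for c x by (rule Sp_scale[OF assms(1)])
  show "nV (Sp k x) \<le> 1 * nV x" if "x \<in> V" for x using Sp_V[OF assms(2) that] by simp
qed


lemma Z_closed:
  fixes sW :: "'k::{real_normed_field,heine_borel} \<Rightarrow> 'w::ab_group_add \<Rightarrow> 'w"
    and A :: "('o \<Rightarrow> nat \<Rightarrow> 'w) set"
  assumes qnsV: "qns (seq_scale sW) q V nV"
    and st: "stable_function_space (seq_scale sW) q V nV A nA"
    and qnsA: "qns (fun_scale (seq_scale sW)) q A nA"
  shows "closedin (qnorm_topology A nA) {g \<in> A. g \<omega>1 = g \<omega>2}"
proof -
  interpret V: qns "seq_scale sW" q V nV by (rule qnsV)
  interpret A: qns "fun_scale (seq_scale sW)" q A nA by (rule qnsA)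
  let ?P = "product_topology (\<lambda>_::'o. qnorm_topology V nV) UNIV"
  have tsP: "topspace ?P = {\<phi>. \<forall>\<omega>. \<phi> \<omega> \<in> V}"
    by (simp add: V.topspace_q PiE_UNIV_domain Pi_def)
  define T where "T = {\<phi> \<in> topspace ?P. \<phi> \<omega>1 \<noteq> \<phi> \<omega>2}"
  have "openin ?P T"
  proof (subst openin_subopen, intro ballI)
    fix \<phi> assume \<phi>: "\<phi> \<in> T"
    define a where "a = \<phi> \<omega>1"
    define b where "b = \<phi> \<omega>2"
    have aV: "a \<in> V" and bV: "b \<in> V" using \<phi> tsP unfolding T_def a_def b_def by auto
    have ab: "a \<noteq> b" using \<phi> unfolding T_def a_def b_def by auto
    define r where "r = V.pn (a - b)"
    have r: "r > 0"
    proof -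
      have "a - b \<noteq> 0" using ab by simp
      then have "V.pn (a - b) \<noteq> 0" using V.pn_eq0[of "a - b"] aV bV by auto
      then show ?thesis using V.pn_nonneg[of "a - b"] r_def by linarith
    qed
    define Ba where "Ba = {y \<in> V. V.pn (y - a) < r / 2}"
    define Bb where "Bb = {y \<in> V. V.pn (y - b) < r / 2}"
    have oBa: "openin (qnorm_topology V nV) Ba" unfolding Ba_def V.openin_q
      by (rule V.ball_open[OF aV]) (use r in simp)
    have oBb: "openin (qnorm_topology V nV) Bb" unfolding Bb_def V.openin_q
      by (rule V.ball_open[OF bV]) (use r in simp)
    define U where "U = {\<psi> \<in> topspace ?P. \<psi> \<omega>1 \<in> Ba} \<inter> {\<psi> \<in> topspace ?P. \<psi> \<omega>2 \<in> Bb}"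
    have "openin ?P U" unfolding U_def
      by (intro openin_Int openin_continuous_map_preimage[OF continuous_map_product_projection] oBa oBb) auto
    moreover have "\<phi> \<in> U"
    proof -
      have tp: "\<phi> \<in> topspace ?P" using \<phi> unfolding T_def by simp
      have "a \<in> Ba" unfolding Ba_def using aV r by simp
      moreover have "b \<in> Bb" unfolding Bb_def using bV r by simp
      ultimately show ?thesis unfolding U_def using tp a_def b_def by simp
    qed
    moreover have "U \<subseteq> T"
    proof
      fix \<psi> assume \<psi>: "\<psi> \<in> U"
      then have y1: "\<psi> \<omega>1 \<in> Ba" and y2: "\<psi> \<omega>2 \<in> Bb" and tp: "\<psi> \<in> topspace ?P" unfolding U_def by auto
      have "\<psi> \<omega>1 \<noteq> \<psi> \<omega>2"
      proof
        assume eq: "\<psi> \<omega>1 = \<psi> \<omega>2"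
        define y where "y = \<psi> \<omega>1"
        have yV: "y \<in> V" and p1: "V.pn (y - a) < r / 2" and p2: "V.pn (y - b) < r / 2"
          using y1 y2 eq unfolding Ba_def Bb_def y_def by auto
        have "V.pn (a - b) \<le> V.pn (a - y) + V.pn (y - b)" by (rule V.pn_tri[OF aV yV bV])
        also have "V.pn (a - y) = V.pn (y - a)" by (rule V.pn_commute[OF aV yV])
        finally show False using p1 p2 r_def by linarith
      qed
      then show "\<psi> \<in> T" unfolding T_def using tp by simp
    qed
    ultimately show "\<exists>U. openin ?P U \<and> \<phi> \<in> U \<and> U \<subseteq> T" by blast
  qed
  have Asub: "A \<subseteq> topspace ?P" using st tsP unfolding stable_function_space_def by auto
  have eqT: "A - {g \<in> A. g \<omega>1 = g \<omega>2} = T \<inter> A" unfolding T_def using Asub by auto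
  have "openin (subtopology ?P A) (A - {g \<in> A. g \<omega>1 = g \<omega>2})"
    unfolding eqT openin_subtopology using \<open>openin ?P T\<close> by blast
  then have op: "openin (qnorm_topology A nA) (A - {g \<in> A. g \<omega>1 = g \<omega>2})"
    using st unfolding stable_function_space_def by blast
  show ?thesis unfolding closedin_def A.topspace_q
  proof
    show "{g \<in> A. g \<omega>1 = g \<omega>2} \<subseteq> A" by blast
    show "openin (qnorm_topology A nA) (A - {g \<in> A. g \<omega>1 = g \<omega>2})" by (rule op)
  qed
qed

lemma main_generic:
  fixes sW :: "'k::{real_normed_field,heine_borel} \<Rightarrow> 'w::ab_group_add \<Rightarrow> 'w"
    and V :: "(nat \<Rightarrow> 'w) set" and nV :: "(nat \<Rightarrow> 'w) \<Rightarrow> real"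
    and A :: "('o \<Rightarrow> nat \<Rightarrow> 'w) set" and nA :: "('o \<Rightarrow> nat \<Rightarrow> 'w) \<Rightarrow> real"
    and \<kappa> :: "'k \<Rightarrow> nat set"
  assumes kap: "inj \<kappa>" and vs: "vector_space sW" and q0: "0 < q" and q1: "q \<le> 1"
    and sp: "spreading_qspace sW q V nV" and st: "stable_function_space (seq_scale sW) q V nV A nA"
  shows "{f \<in> A. \<not> inj f} = {0} \<or> pointwise_spaceable (fun_scale (seq_scale sW)) A nA {f \<in> A. \<not> inj f}"
proof (cases "{f \<in> A. \<not> inj f} = {0}")
  case True
  then show ?thesis by (rule disjI1)
next
  case False
  let ?s = "fun_scale (seq_scale sW)"
  let ?N = "{f \<in> A. \<not> inj f}"
  have ne: "?N \<noteq> {0}" using False .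
  have vsV: "vector_space (seq_scale sW)" by (rule vs_seq[OF vs])
  have vsA: "vector_space ?s" by (rule vs_fun[OF vsV])
  have qnsV: "qns (seq_scale sW) q V nV"
    unfolding qns_def using vsV sp q0 q1 by (auto simp: spreading_qspace_def complete_qnorm_def)
  have qbsA: "qbs ?s q A nA"
    unfolding qbs_def qbs_axioms_def qns_def using vsA st q0 q1
    by (auto simp: stable_function_space_def complete_qnorm_def)
  have qnsA: "qns ?s q A nA" using qbsA by (simp add: qbs_def)
  interpret A: qbs ?s q A nA by (rule qbsA)
  have AV: "\<And>g \<omega>. g \<in> A \<Longrightarrow> g \<omega> \<in> V" using st unfolding stable_function_space_def by blast
  have stab: "\<And>g u. g \<in> A \<Longrightarrow> bounded_op (seq_scale sW) V nV u \<Longrightarrow> u \<circ> g \<in> A"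
    using st unfolding stable_function_space_def by blast
  have zW: "sW c 0 = 0" for c
  proof -
    have "module sW" using vs by (simp add: module_iff_vector_space)
    then show ?thesis by (rule module.scale_zero_right)
  qed
  have "pointwise_spaceable ?s A nA ?N" unfolding pointwise_spaceable_def
  proof (intro ballI)
    fix f assume fN: "f \<in> ?N"
    obtain h where hN: "h \<in> ?N" "h \<noteq> 0" and fh: "f = 0 \<or> f = h"
    proof (cases "f = 0")
      case True
      have "\<exists>h\<in>?N. h \<noteq> 0"
      proof (rule ccontr)
        assume "\<not> (\<exists>h\<in>?N. h \<noteq> 0)"
        then have "?N \<subseteq> {0}" by blast
        moreover have "0 \<in> ?N" using fN True by simp
        ultimately show False using ne by blast
      qed
      then obtain h where "h \<in> ?N" "h \<noteq> 0" by blast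
      then show thesis using that True by blast
    next
      case False
      then show thesis using that fN by blast
    qed
    have hA: "h \<in> A" and hni: "\<not> inj h" using hN by auto
    obtain \<omega>1 \<omega>2 where om: "\<omega>1 \<noteq> \<omega>2" "h \<omega>1 = h \<omega>2" using hni unfolding inj_on_def by auto
    have "\<exists>\<omega> j. h \<omega> j \<noteq> 0"
    proof (rule ccontr)
      assume "\<not> (\<exists>\<omega> j. h \<omega> j \<noteq> 0)"
      then have "h = 0" by (simp add: fun_eq_iff)
      then show False using hN(2) by simp
    qed
    then obtain \<omega>0 j0 where j0: "h \<omega>0 j0 \<noteq> 0" by (elim exE)
    define e where "e k = Sp k \<circ> h" for k
    have eA: "e k \<in> A" for k unfolding e_def by (rule stab[OF hA Sp_bounded[OF vs sp]])
    define d where "d k = (case k of 0 \<Rightarrow> h | Suc j \<Rightarrow> e j)" for k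
    have d0: "d 0 = h" and dS: "d (Suc k) = e k" for k by (simp_all add: d_def)
    have dA: "range d \<subseteq> A"
    proof
      fix v assume "v \<in> range d"
      then obtain k where k: "v = d k" by blast
      show "v \<in> A" unfolding k by (cases k) (simp_all add: d0 dS hA eA)
    qed
    have spA: "A.span (range d) \<subseteq> A" by (rule A.span_subE[OF dA])
    define X where "X = qnorm_topology A nA closure_of A.span (range d)"
    have Xsub: "A.subspace X" unfolding X_def by (rule A.closure_subspace[OF A.subspace_span spA])
    have XA: "X \<subseteq> A" unfolding X_def using closure_of_subset_topspace[of "qnorm_topology A nA"] A.topspace_q by simp
    have Xclosed: "closedin (qnorm_topology A nA) X" unfolding X_def by simp
    have spX: "A.span (range d) \<subseteq> X" unfolding X_def using closure_of_subset[of "A.span (range d)"] spA A.topspace_q by simp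
    have XclH: "X \<subseteq> A \<and> (\<forall>y x. (\<forall>m. y m \<in> X) \<longrightarrow> x \<in> A \<longrightarrow> (\<lambda>m. A.pn (y m - x)) \<longlonglongrightarrow> 0 \<longrightarrow> x \<in> X)"
      using Xclosed A.closedin_seq by simp
    have Xcl: "\<And>y x. (\<forall>m. y m \<in> X) \<Longrightarrow> x \<in> A \<Longrightarrow> (\<lambda>m. A.pn (y m - x)) \<longlonglongrightarrow> 0 \<Longrightarrow> x \<in> X"
    proof -
      fix y x assume "\<forall>m. y m \<in> X" "x \<in> A" "(\<lambda>m. A.pn (y m - x)) \<longlonglongrightarrow> 0"
      then show "x \<in> X" using XclH by simp
    qed
    have eX: "e k \<in> X" for k
    proof -
      have "e k \<in> range d" using dS[of k] by (metis rangeI)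
      then show ?thesis using spX A.span_base by blast
    qed
    define p where "p k = enumerate (Nk k) j0" for k
    have enot: "e k \<notin> A.span (e ` {..<k})" for k
    proof
      assume ein: "e k \<in> A.span (e ` {..<k})"
      let ?W = "{v :: 'o \<Rightarrow> nat \<Rightarrow> 'w. v \<omega>0 (p k) = 0}"
      have Wsub: "A.subspace ?W" unfolding A.subspace_def
        by (auto simp: fun_scale_def seq_scale_def zW)
      have "e ` {..<k} \<subseteq> ?W"
      proof
        fix v assume "v \<in> e ` {..<k}"
        then obtain m where m: "m < k" "v = e m" by blast
        have "p k \<in> Nk k" unfolding p_def by (rule enumerate_in_set[OF Nk_inf])
        then have "p k \<notin> Nk m" using Nk_disj[of k m] m(1) by auto
        then show "v \<in> ?W" unfolding m(2) e_def by (simp add: Sp_out)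
      qed
      then have "A.span (e ` {..<k}) \<subseteq> ?W" by (rule A.span_minimal[OF _ Wsub])
      then have "e k \<omega>0 (p k) = 0" using ein by blast
      moreover have "e k \<omega>0 (p k) = h \<omega>0 j0" unfolding e_def p_def by (simp add: Sp_enum)
      ultimately show False using j0 by simp
    qed
    have dimcI: "dimc ?s q A nA X e"
    proof (rule dimc.intro[OF qbsA], rule dimc_axioms.intro)
      show "A.subspace X" by (rule Xsub)
      show "X \<subseteq> A" by (rule XA)
      show "\<And>y x. (\<forall>m. y m \<in> X) \<Longrightarrow> x \<in> A \<Longrightarrow> (\<lambda>m. A.pn (y m - x)) \<longlonglongrightarrow> 0 \<Longrightarrow> x \<in> X" by (rule Xcl)
      show "\<And>k. e k \<in> X" by (rule eX)
      show "\<And>k. e k \<notin> A.span (e ` {..<k})" by (rule enot)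
    qed
    interpret D: dimc ?s q A nA X e by (rule dimcI)
    obtain I where I: "I \<subseteq> X" "\<not> A.dependent I" "I \<approx> (UNIV :: real set)"
      using D.lower_bound by blast
    obtain B where B: "I \<subseteq> B" "B \<subseteq> X" "\<not> A.dependent B" "X \<subseteq> A.span B"
      using A.maximal_independent_subset_extend[OF I(1,2)] by blast
    have spB: "A.span B = X"
    proof
      show "A.span B \<subseteq> X" by (rule A.span_minimal[OF B(2) Xsub])
      show "X \<subseteq> A.span B" by (rule B(4))
    qed
    have Beq: "B \<approx> (UNIV :: real set)"
    proof (rule lepoll_antisym)
      have "B \<lesssim> X" using B(2) by (rule subset_imp_lepoll)
      also have "X \<lesssim> (UNIV :: (nat \<Rightarrow> nat \<times> (nat \<Rightarrow> 'k)) set)"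
        unfolding X_def by (rule A.closure_lepoll[OF dA])
      also have "(UNIV :: (nat \<Rightarrow> nat \<times> (nat \<Rightarrow> 'k)) set) \<lesssim> (UNIV :: real set)"
        by (rule seqspace_lepoll_real[OF kap])
      finally show "B \<lesssim> (UNIV :: real set)" .
      have "(UNIV :: real set) \<approx> I" using I(3) by (rule eqpoll_sym)
      also have "I \<lesssim> B" using B(1) by (rule subset_imp_lepoll)
      finally show "(UNIV :: real set) \<lesssim> B" .
    qed
    define Z where "Z = {g \<in> A. g \<omega>1 = g \<omega>2}"
    have Zcl: "closedin (qnorm_topology A nA) Z" unfolding Z_def by (rule Z_closed[OF qnsV st qnsA])
    have Zsub: "A.subspace Z" unfolding A.subspace_def Z_def
    proof (intro conjI ballI allI)
      show "0 \<in> {g \<in> A. g \<omega>1 = g \<omega>2}" by simp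
      fix x y assume x: "x \<in> {g \<in> A. g \<omega>1 = g \<omega>2}" and y: "y \<in> {g \<in> A. g \<omega>1 = g \<omega>2}"
      show "x + y \<in> {g \<in> A. g \<omega>1 = g \<omega>2}" using A.Eadd[of x y] x y by simp
    next
      fix c x assume x: "x \<in> {g \<in> A. g \<omega>1 = g \<omega>2}"
      have "?s c x \<in> A" using A.Escale[of x c] x by simp
      moreover have "?s c x \<omega>1 = ?s c x \<omega>2" using x by (simp add: fun_scale_def)
      ultimately show "?s c x \<in> {g \<in> A. g \<omega>1 = g \<omega>2}" by simp
    qed
    have dZ: "range d \<subseteq> Z"
    proof
      fix v assume "v \<in> range d"
      then obtain k where k: "v = d k" by blast
      show "v \<in> Z"
      proof (cases k)
        case 0
        then show ?thesis using k d0 hA om(2) by (simp add: Z_def)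
      next
        case (Suc j)
        then show ?thesis using k dS eA om(2) by (simp add: Z_def e_def)
      qed
    qed
    have "A.span (range d) \<subseteq> Z" by (rule A.span_minimal[OF dZ Zsub])
    then have XZ: "X \<subseteq> Z" unfolding X_def by (rule closure_of_minimal[OF _ Zcl])
    have XN: "X \<subseteq> ?N"
    proof
      fix g assume "g \<in> X"
      then have "g \<in> Z" using XZ by blast
      then have "g \<in> A" "g \<omega>1 = g \<omega>2" unfolding Z_def by auto
      then show "g \<in> ?N" using om(1) unfolding inj_def by auto
    qed
    have fX: "f \<in> X"
    proof (cases "f = 0")
      case True
      then show ?thesis using A.subspace_0[OF Xsub] by simp
    next
      case False
      then have "f = h" using fh by simp
      then have "f \<in> range d" using d0 by (metis rangeI)
      then show ?thesis using spX A.span_base by blast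
    qed
    have lsX: "linear_subspace ?s X" using Xsub unfolding linear_subspace_def A.subspace_def .
    have Bex: "\<exists>B. B \<subseteq> X \<and> \<not> module.dependent ?s B \<and> module.span ?s B = X \<and> B \<approx> (UNIV :: real set)"
      by (intro exI[of _ B] conjI B(2,3) spB Beq)
    show "\<exists>X. linear_subspace ?s X \<and> X \<subseteq> A \<and> closedin (qnorm_topology A nA) X \<and>
        f \<in> X \<and> X \<subseteq> ?N \<and>
        (\<exists>B. B \<subseteq> X \<and> \<not> module.dependent ?s B \<and> module.span ?s B = X \<and> B \<approx> (UNIV :: real set))"
      by (rule exI[of _ X]) (intro conjI lsX XA Xclosed fX XN Bex)
  qed
  then show ?thesis by (rule disjI2)
qed

theorem theorem3p3:
  shows "(\<forall>(sW :: real \<Rightarrow> 'w::ab_group_add \<Rightarrow> 'w) (q::real) (V :: (nat \<Rightarrow> 'w) set) nV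
            (A :: ('o \<Rightarrow> nat \<Rightarrow> 'w) set) nA.
            vector_space sW \<and> 0 < q \<and> q \<le> 1 \<and> V \<noteq> {0} \<and> spreading_qspace sW q V nV \<and>
            stable_function_space (seq_scale sW) q V nV A nA \<longrightarrow>
            {f \<in> A. \<not> inj f} = {0} \<or>
            pointwise_spaceable (fun_scale (seq_scale sW)) A nA {f \<in> A. \<not> inj f})
       \<and> (\<forall>(sW :: complex \<Rightarrow> 'w::ab_group_add \<Rightarrow> 'w) (q::real) (V :: (nat \<Rightarrow> 'w) set) nV
            (A :: ('o \<Rightarrow> nat \<Rightarrow> 'w) set) nA.
            vector_space sW \<and> 0 < q \<and> q \<le> 1 \<and> V \<noteq> {0} \<and> spreading_qspace sW q V nV \<and>
            stable_function_space (seq_scale sW) q V nV A nA \<longrightarrow>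
            {f \<in> A. \<not> inj f} = {0} \<or>
            pointwise_spaceable (fun_scale (seq_scale sW)) A nA {f \<in> A. \<not> inj f})"
proof (rule conjI)
  show "\<forall>(sW :: real \<Rightarrow> 'w::ab_group_add \<Rightarrow> 'w) (q::real) (V :: (nat \<Rightarrow> 'w) set) nV
            (A :: ('o \<Rightarrow> nat \<Rightarrow> 'w) set) nA.
            vector_space sW \<and> 0 < q \<and> q \<le> 1 \<and> V \<noteq> {0} \<and> spreading_qspace sW q V nV \<and>
            stable_function_space (seq_scale sW) q V nV A nA \<longrightarrow>
            {f \<in> A. \<not> inj f} = {0} \<or>
            pointwise_spaceable (fun_scale (seq_scale sW)) A nA {f \<in> A. \<not> inj f}"
  proof (intro allI impI)
    fix sW :: "real \<Rightarrow> 'w \<Rightarrow> 'w" and q :: real and V :: "(nat \<Rightarrow> 'w) set" and nV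
      and A :: "('o \<Rightarrow> nat \<Rightarrow> 'w) set" and nA
    assume H: "vector_space sW \<and> 0 < q \<and> q \<le> 1 \<and> V \<noteq> {0} \<and> spreading_qspace sW q V nV \<and>
            stable_function_space (seq_scale sW) q V nV A nA"
    obtain \<kappa> :: "real \<Rightarrow> nat set" where k: "inj \<kappa>" using real_kappa by blast
    from H have vs: "vector_space sW" and q0: "0 < q" and q1: "q \<le> 1"
      and sp: "spreading_qspace sW q V nV" and st: "stable_function_space (seq_scale sW) q V nV A nA"
      by auto
    show "{f \<in> A. \<not> inj f} = {0} \<or> pointwise_spaceable (fun_scale (seq_scale sW)) A nA {f \<in> A. \<not> inj f}"
      by (rule main_generic[OF k vs q0 q1 sp st])
  qed
next
  show "\<forall>(sW :: complex \<Rightarrow> 'w::ab_group_add \<Rightarrow> 'w) (q::real) (V :: (nat \<Rightarrow> 'w) set) nV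
            (A :: ('o \<Rightarrow> nat \<Rightarrow> 'w) set) nA.
            vector_space sW \<and> 0 < q \<and> q \<le> 1 \<and> V \<noteq> {0} \<and> spreading_qspace sW q V nV \<and>
            stable_function_space (seq_scale sW) q V nV A nA \<longrightarrow>
            {f \<in> A. \<not> inj f} = {0} \<or>
            pointwise_spaceable (fun_scale (seq_scale sW)) A nA {f \<in> A. \<not> inj f}"
  proof (intro allI impI)
    fix sW :: "complex \<Rightarrow> 'w \<Rightarrow> 'w" and q :: real and V :: "(nat \<Rightarrow> 'w) set" and nV
      and A :: "('o \<Rightarrow> nat \<Rightarrow> 'w) set" and nA
    assume H: "vector_space sW \<and> 0 < q \<and> q \<le> 1 \<and> V \<noteq> {0} \<and> spreading_qspace sW q V nV \<and>
            stable_function_space (seq_scale sW) q V nV A nA"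
    obtain \<kappa> :: "complex \<Rightarrow> nat set" where k: "inj \<kappa>" using complex_kappa by blast
    from H have vs: "vector_space sW" and q0: "0 < q" and q1: "q \<le> 1"
      and sp: "spreading_qspace sW q V nV" and st: "stable_function_space (seq_scale sW) q V nV A nA"
      by auto
    show "{f \<in> A. \<not> inj f} = {0} \<or> pointwise_spaceable (fun_scale (seq_scale sW)) A nA {f \<in> A. \<not> inj f}"
      by (rule main_generic[OF k vs q0 q1 sp st])
  qed
qed

end
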